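(* Let $(M,g)$ be an $n$-dimensional Riemannian manifold with $n\geq 3$, let $f$ be a smooth function on $M$ with $V=\operatorname{grad}(f)$ non-vanishing, and let $\lambda$ be a smooth function on $M$ such that $$\operatorname{Hess}(f)+\operatorname{Ric}=\left(\frac{\operatorname{scal}}{2}+\lambda\right)g .$$ Then $$Q(\operatorname{grad}(f))=-(n-1)\operatorname{grad}(\lambda)-\frac{n-2}{2}\operatorname{grad}(\operatorname{scal}).$$ Moreover, if $Q(\operatorname{grad}(f))=0$, then $$\operatorname{grad}(\lambda)=\operatorname{grad}(\Delta(f))=-\frac{n-2}{2(n-1)}\operatorname{grad}(\operatorname{scal}).$$
   Context: $\operatorname{Ric}$ is the Ricci tensor, $\operatorname{scal}$ the scalar curvature of $g$, $\operatorname{Hess}(f)$ the Hessian of $f$, $\Delta(f)=\operatorname{div}(\operatorname{grad} f)$, and $Q$ is the Ricci operator defined by $g(QX,Y)=\operatorname{Ric}(X,Y)$ for all vector fields $X,Y$. The displayed equation says that $(\operatorname{grad}(f),\lambda)$ is a gradient almost Einstein soliton, i.e. $\frac12\pounds_{V}g+\operatorname{Ric}=(\frac{\operatorname{scal}}{2}+\lambda)g$ with $V=\operatorname{grad} f$. *)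

theory Defs
  imports "HOL-Analysis.Analysis"
begin

text \<open>Local coordinate model of a Riemannian manifold: an open set U of real^'n
 (a chart domain), with metric coefficients g x $ i $ j.\<close>

type_synonym 'n metric = "real^'n \<Rightarrow> real^'n^'n"
type_synonym 'n scalarf = "real^'n \<Rightarrow> real"

definition pd :: "'n::finite \<Rightarrow> 'n scalarf \<Rightarrow> 'n scalarf" where
  "pd i h x = frechet_derivative h (at x) (axis i 1)"

definition smooth_on :: "(real^'n::finite) set \<Rightarrow> 'n scalarf \<Rightarrow> bool" where
  "smooth_on U h \<longleftrightarrow> (\<forall>is::'n list. \<forall>x\<in>U. (foldr pd is h) differentiable (at x))"

definition riemannian_metric_on :: "(real^'n::finite) set \<Rightarrow> 'n metric \<Rightarrow> bool" where
  "riemannian_metric_on U g \<longleftrightarrow>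
     (\<forall>i j. smooth_on U (\<lambda>x. g x $ i $ j)) \<and>
     (\<forall>x\<in>U. transpose (g x) = g x \<and> (\<forall>v. v \<noteq> 0 \<longrightarrow> v \<bullet> (g x *v v) > 0))"

definition ginv :: "'n::finite metric \<Rightarrow> 'n metric" where
  "ginv g x = matrix_inv (g x)"

definition christoffel :: "'n::finite metric \<Rightarrow> 'n \<Rightarrow> 'n \<Rightarrow> 'n \<Rightarrow> 'n scalarf" where
  "christoffel g k i j x = (1/2) * (\<Sum>l\<in>UNIV. ginv g x $ k $ l *
      (pd i (\<lambda>y. g y $ j $ l) x + pd j (\<lambda>y. g y $ i $ l) x - pd l (\<lambda>y. g y $ i $ j) x))"

definition ricci :: "'n::finite metric \<Rightarrow> 'n \<Rightarrow> 'n \<Rightarrow> 'n scalarf" where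
  "ricci g i j x = (\<Sum>k\<in>UNIV. pd k (christoffel g k i j) x - pd j (christoffel g k i k) x
      + (\<Sum>l\<in>UNIV. christoffel g k k l x * christoffel g l i j x
                   - christoffel g k j l x * christoffel g l i k x))"

definition scal :: "'n::finite metric \<Rightarrow> 'n scalarf" where
  "scal g x = (\<Sum>i\<in>UNIV. \<Sum>j\<in>UNIV. ginv g x $ i $ j * ricci g i j x)"

definition hess :: "'n::finite metric \<Rightarrow> 'n scalarf \<Rightarrow> 'n \<Rightarrow> 'n \<Rightarrow> 'n scalarf" where
  "hess g f i j x = pd i (pd j f) x - (\<Sum>k\<in>UNIV. christoffel g k i j x * pd k f x)"

definition grad :: "'n::finite metric \<Rightarrow> 'n scalarf \<Rightarrow> real^'n \<Rightarrow> real^'n" where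
  "grad g f x = (\<chi> i. \<Sum>j\<in>UNIV. ginv g x $ i $ j * pd j f x)"

definition laplacian :: "'n::finite metric \<Rightarrow> 'n scalarf \<Rightarrow> 'n scalarf" where
  "laplacian g f x = (\<Sum>i\<in>UNIV. \<Sum>j\<in>UNIV. ginv g x $ i $ j * hess g f i j x)"

text \<open>Ricci operator Q: g(QX,Y) = Ric(X,Y), i.e. (QX)^i = g^{ij} Ric_{jk} X^k.\<close>
definition ricci_op :: "'n::finite metric \<Rightarrow> real^'n \<Rightarrow> real^'n \<Rightarrow> real^'n" where
  "ricci_op g x X = (\<chi> i. \<Sum>j\<in>UNIV. \<Sum>k\<in>UNIV. ginv g x $ i $ j * ricci g j k x * X $ k)"

end

theory Submission
  imports Defs "HOL-Library.Function_Algebras"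
begin


lemma pd_local:
  fixes a b :: "'n::finite scalarf"
  assumes "open U" "x \<in> U" "\<And>y. y \<in> U \<Longrightarrow> a y = b y"
  shows "pd i a x = pd i b x"
proof -
  have "\<And>D. (a has_derivative D) (at x) \<longleftrightarrow> (b has_derivative D) (at x)"
    using assms by (metis has_derivative_transform_within_open)
  then have "frechet_derivative a (at x) = frechet_derivative b (at x)"
    unfolding frechet_derivative_def by simp
  then show ?thesis unfolding pd_def by simp
qed

lemma diff_local:
  fixes a b :: "'n::finite scalarf"
  assumes "open U" "x \<in> U" "\<And>y. y \<in> U \<Longrightarrow> a y = b y" "a differentiable (at x)"
  shows "b differentiable (at x)"
  using assms unfolding differentiable_def
  by (metis has_derivative_transform_within_open)

lemma pd_has:
  assumes "(a has_derivative D) (at x)"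
  shows "pd i a x = D (axis i 1)"
  using frechet_derivative_at[OF assms] unfolding pd_def by simp

lemma pd_add:
  assumes "a differentiable (at x)" "b differentiable (at x)"
  shows "pd i (\<lambda>y. a y + b y) x = pd i a x + pd i b x"
proof -
  from assms obtain A B where A: "(a has_derivative A) (at x)" and B: "(b has_derivative B) (at x)"
    unfolding differentiable_def by blast
  show ?thesis using pd_has[OF has_derivative_add[OF A B]] pd_has[OF A] pd_has[OF B] by simp
qed

lemma pd_diff:
  assumes "a differentiable (at x)" "b differentiable (at x)"
  shows "pd i (\<lambda>y. a y - b y) x = pd i a x - pd i b x"
proof -
  from assms obtain A B where A: "(a has_derivative A) (at x)" and B: "(b has_derivative B) (at x)"
    unfolding differentiable_def by blast
  show ?thesis using pd_has[OF has_derivative_diff[OF A B]] pd_has[OF A] pd_has[OF B] by simp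
qed

lemma pd_mult:
  assumes "a differentiable (at x)" "b differentiable (at x)"
  shows "pd i (\<lambda>y. a y * b y) x = pd i a x * b x + a x * pd i b x"
proof -
  from assms obtain A B where A: "(a has_derivative A) (at x)" and B: "(b has_derivative B) (at x)"
    unfolding differentiable_def by blast
  show ?thesis using pd_has[OF has_derivative_mult[OF A B]] pd_has[OF A] pd_has[OF B] by simp
qed

lemma pd_const: "pd i (\<lambda>y. c) x = 0"
  unfolding pd_def by simp

lemma pd_cmult:
  assumes "a differentiable (at x)"
  shows "pd i (\<lambda>y. c * a y) x = c * pd i a x"
  using pd_mult[of "\<lambda>y. c" x a i] assms by (simp add: pd_const)

lemma pd_sum:
  assumes "finite S" "\<And>k. k \<in> S \<Longrightarrow> F k differentiable (at x)"
  shows "pd i (\<lambda>y. \<Sum>k\<in>S. F k y) x = (\<Sum>k\<in>S. pd i (F k) x)"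
proof -
  from assms(2) have "\<forall>k\<in>S. \<exists>D. (F k has_derivative D) (at x)"
    unfolding differentiable_def by blast
  then obtain D where D: "\<And>k. k \<in> S \<Longrightarrow> (F k has_derivative D k) (at x)" by metis
  show ?thesis using pd_has[OF has_derivative_sum[of S F D, OF D]] pd_has[OF D] by simp
qed

definition Ck :: "(real^'n::finite) set \<Rightarrow> nat \<Rightarrow> 'n scalarf \<Rightarrow> bool" where
  "Ck U k h \<longleftrightarrow> (\<forall>is. length is \<le> k \<longrightarrow> (\<forall>x\<in>U. foldr pd is h differentiable (at x)))"

lemma smooth_Ck: "smooth_on U h \<longleftrightarrow> (\<forall>k. Ck U k h)"
  unfolding smooth_on_def Ck_def by (meson le_refl)

lemma Ck_0: "Ck U 0 h \<longleftrightarrow> (\<forall>x\<in>U. h differentiable (at x))"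
  unfolding Ck_def by simp

lemma Ck_Suc: "Ck U (Suc k) h \<longleftrightarrow> (\<forall>x\<in>U. h differentiable (at x)) \<and> (\<forall>i. Ck U k (pd i h))"
proof
  assume A: "Ck U (Suc k) h"
  show "(\<forall>x\<in>U. h differentiable (at x)) \<and> (\<forall>i. Ck U k (pd i h))"
  proof
    show "\<forall>x\<in>U. h differentiable (at x)" using A unfolding Ck_def
      by (drule_tac spec[of _ "[]"]) simp
    show "\<forall>i. Ck U k (pd i h)"
      unfolding Ck_def
    proof (intro allI impI)
      fix i and "is" :: "'a list" assume "length is \<le> k"
      then have "length (is @ [i]) \<le> Suc k" by simp
      then show "\<forall>x\<in>U. foldr pd is (pd i h) differentiable (at x)"
        using A unfolding Ck_def by (drule_tac spec[of _ "is @ [i]"]) simp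
    qed
  qed
next
  assume B: "(\<forall>x\<in>U. h differentiable (at x)) \<and> (\<forall>i. Ck U k (pd i h))"
  show "Ck U (Suc k) h" unfolding Ck_def
  proof (intro allI impI)
    fix "is" :: "'a list" assume L: "length is \<le> Suc k"
    show "\<forall>x\<in>U. foldr pd is h differentiable (at x)"
    proof (cases "is" rule: rev_cases)
      case Nil then show ?thesis using B by simp
    next
      case (snoc js i)
      then have "length js \<le> k" using L by simp
      moreover have "foldr pd is h = foldr pd js (pd i h)" using snoc by simp
      ultimately show ?thesis using B unfolding Ck_def by simp
    qed
  qed
qed

lemma Ck_diff: "Ck U k h \<Longrightarrow> x \<in> U \<Longrightarrow> h differentiable (at x)"
  unfolding Ck_def by (drule_tac spec[of _ "[]"]) simp

lemma Ck_pd: "Ck U (Suc k) h \<Longrightarrow> Ck U k (pd i h)"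
  using Ck_Suc by blast

lemma Ck_mono: "Ck U (Suc k) h \<Longrightarrow> Ck U k h"
  unfolding Ck_def by simp

lemma Ck_mono': "Ck U k h \<Longrightarrow> m \<le> k \<Longrightarrow> Ck U m h"
  unfolding Ck_def by simp

lemma Ck_local:
  assumes "open U" "Ck U k a" "\<And>y. y \<in> U \<Longrightarrow> a y = b y"
  shows "Ck U k b"
  using assms(2,3)
proof (induction k arbitrary: a b)
  case 0
  then show ?case unfolding Ck_0 using diff_local[OF assms(1), of _ a b] by blast
next
  case (Suc k)
  have "\<forall>x\<in>U. b differentiable (at x)"
    using Suc.prems diff_local[OF assms(1), of _ a b] Ck_diff by blast
  moreover have "Ck U k (pd i b)" for i
  proof -
    have "Ck U k (pd i a)" using Suc.prems Ck_Suc by blast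
    moreover have "\<And>y. y \<in> U \<Longrightarrow> pd i a y = pd i b y"
      using pd_local[OF assms(1)] Suc.prems(2) by blast
    ultimately show ?thesis using Suc.IH by blast
  qed
  ultimately show ?case using Ck_Suc by blast
qed

lemma Ck_const: "Ck U k (\<lambda>y. c)"
proof (induction k arbitrary: c)
  case 0 then show ?case by (simp add: Ck_0)
next
  case (Suc k)
  have "Ck U k (pd i (\<lambda>y. c))" for i
  proof -
    have "pd i (\<lambda>y. c) = (\<lambda>y. 0)" by (simp add: pd_const fun_eq_iff)
    then show ?thesis using Suc.IH[of 0] by simp
  qed
  then show ?case unfolding Ck_Suc by simp
qed

lemma Ck_add:
  assumes "open U"
  shows "Ck U k a \<Longrightarrow> Ck U k b \<Longrightarrow> Ck U k (\<lambda>y. a y + b y)"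
proof (induction k arbitrary: a b)
  case 0 then show ?case by (simp add: Ck_0)
next
  case (Suc k)
  have "Ck U k (pd i (\<lambda>y. a y + b y))" for i
  proof -
    have "Ck U k (\<lambda>y. pd i a y + pd i b y)" using Suc.IH Suc.prems Ck_pd by blast
    moreover have "\<And>y. y \<in> U \<Longrightarrow> pd i a y + pd i b y = pd i (\<lambda>y. a y + b y) y"
      using Suc.prems by (simp add: pd_add Ck_diff)
    ultimately show ?thesis using Ck_local[OF assms] by blast
  qed
  then show ?case using Suc.prems by (simp add: Ck_Suc Ck_diff)
qed

lemma Ck_cmult:
  assumes "open U"
  shows "Ck U k a \<Longrightarrow> Ck U k (\<lambda>y. c * a y)"
proof (induction k arbitrary: a)
  case 0 then show ?case by (simp add: Ck_0)
next
  case (Suc k)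
  have "Ck U k (pd i (\<lambda>y. c * a y))" for i
  proof -
    have "Ck U k (\<lambda>y. c * pd i a y)" using Suc.IH Suc.prems Ck_pd by blast
    moreover have "\<And>y. y \<in> U \<Longrightarrow> c * pd i a y = pd i (\<lambda>y. c * a y) y"
      using Suc.prems by (simp add: pd_cmult Ck_diff)
    ultimately show ?thesis using Ck_local[OF assms] by blast
  qed
  then show ?case using Suc.prems by (simp add: Ck_Suc Ck_diff)
qed

lemma Ck_minus:
  assumes "open U"
  shows "Ck U k a \<Longrightarrow> Ck U k b \<Longrightarrow> Ck U k (\<lambda>y. a y - b y)"
proof -
  assume a: "Ck U k a" and b: "Ck U k b"
  have "Ck U k (\<lambda>y. (-1) * b y)" using Ck_cmult[OF assms b] .
  then have "Ck U k (\<lambda>y. a y + (-1) * b y)" using Ck_add[OF assms a] by blast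
  then show ?thesis by simp
qed

lemma Ck_mult:
  assumes "open U"
  shows "Ck U k a \<Longrightarrow> Ck U k b \<Longrightarrow> Ck U k (\<lambda>y. a y * b y)"
proof (induction k arbitrary: a b)
  case 0 then show ?case by (simp add: Ck_0)
next
  case (Suc k)
  have "Ck U k (pd i (\<lambda>y. a y * b y))" for i
  proof -
    have a1: "Ck U k (pd i a)" "Ck U k a" using Suc.prems(1) Ck_pd Ck_mono by auto
    have b1: "Ck U k (pd i b)" "Ck U k b" using Suc.prems(2) Ck_pd Ck_mono by auto
    have "Ck U k (\<lambda>y. pd i a y * b y)" using Suc.IH[OF a1(1) b1(2)] .
    moreover have "Ck U k (\<lambda>y. a y * pd i b y)" using Suc.IH[OF a1(2) b1(1)] .
    ultimately have "Ck U k (\<lambda>y. pd i a y * b y + a y * pd i b y)" using Ck_add[OF assms] by blast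
    moreover have "\<And>y. y \<in> U \<Longrightarrow> pd i a y * b y + a y * pd i b y = pd i (\<lambda>y. a y * b y) y"
      using Suc.prems by (simp add: pd_mult Ck_diff)
    ultimately show ?thesis using Ck_local[OF assms] by blast
  qed
  then show ?case using Suc.prems by (simp add: Ck_Suc Ck_diff)
qed

lemma Ck_sum:
  assumes "open U" "finite S" "\<And>j. j \<in> S \<Longrightarrow> Ck U k (F j)"
  shows "Ck U k (\<lambda>y. \<Sum>j\<in>S. F j y)"
  using assms(2,3)
proof (induction S rule: finite_induct)
  case empty then show ?case by (simp add: Ck_const)
next
  case (insert x F)
  then show ?case by (simp add: Ck_add[OF assms(1)])
qed

lemma Ck_prod:
  assumes "open U" "finite S" "\<And>j. j \<in> S \<Longrightarrow> Ck U k (F j)"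
  shows "Ck U k (\<lambda>y. \<Prod>j\<in>S. F j y)"
  using assms(2,3)
proof (induction S rule: finite_induct)
  case empty then show ?case by (simp add: Ck_const)
next
  case (insert x F)
  then show ?case by (simp add: Ck_mult[OF assms(1)])
qed

lemma Ck_inverse:
  assumes "open U"
  shows "Ck U k a \<Longrightarrow> (\<forall>y\<in>U. a y \<noteq> 0) \<Longrightarrow> Ck U k (\<lambda>y. inverse (a y))"
proof (induction k arbitrary: a)
  case 0 then show ?case by (simp add: Ck_0)
next
  case (Suc k)
  have inv: "Ck U k (\<lambda>y. inverse (a y))" using Suc.IH Suc.prems Ck_mono by blast
  have "Ck U k (pd i (\<lambda>y. inverse (a y)))" for i
  proof -
    have "Ck U k (pd i a)" using Suc.prems Ck_pd by blast
    then have "Ck U k (\<lambda>y. pd i a y * (inverse (a y) * inverse (a y)))"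
      using inv Ck_mult[OF assms] by blast
    then have "Ck U k (\<lambda>y. - 1 * (pd i a y * (inverse (a y) * inverse (a y))))"
      using Ck_cmult[OF assms] by blast
    moreover have "\<And>y. y \<in> U \<Longrightarrow> - 1 * (pd i a y * (inverse (a y) * inverse (a y))) = pd i (\<lambda>y. inverse (a y)) y"
    proof -
      fix y assume y: "y \<in> U"
      obtain A where A: "(a has_derivative A) (at y)" using Ck_diff[OF Suc.prems(1) y]
        unfolding differentiable_def by blast
      show "- 1 * (pd i a y * (inverse (a y) * inverse (a y))) = pd i (\<lambda>y. inverse (a y)) y"
        using pd_has[OF Deriv.has_derivative_inverse[OF _ A]] pd_has[OF A] Suc.prems(2) y
        by (simp add: field_simps)
    qed
    ultimately show ?thesis using Ck_local[OF assms] by blast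
  qed
  then show ?case using Suc.prems by (simp add: Ck_Suc Ck_diff)
qed


lemma smooth_const: "smooth_on U (\<lambda>y. c)" unfolding smooth_Ck using Ck_const by blast
lemma smooth_add: "open U \<Longrightarrow> smooth_on U a \<Longrightarrow> smooth_on U b \<Longrightarrow> smooth_on U (\<lambda>y. a y + b y)"
  unfolding smooth_Ck using Ck_add by blast
lemma smooth_minus: "open U \<Longrightarrow> smooth_on U a \<Longrightarrow> smooth_on U b \<Longrightarrow> smooth_on U (\<lambda>y. a y - b y)"
  unfolding smooth_Ck using Ck_minus by blast
lemma smooth_mult: "open U \<Longrightarrow> smooth_on U a \<Longrightarrow> smooth_on U b \<Longrightarrow> smooth_on U (\<lambda>y. a y * b y)"
  unfolding smooth_Ck using Ck_mult by blast
lemma smooth_cmult: "open U \<Longrightarrow> smooth_on U a \<Longrightarrow> smooth_on U (\<lambda>y. c * a y)"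
  unfolding smooth_Ck using Ck_cmult by blast
lemma smooth_sum: "open U \<Longrightarrow> finite S \<Longrightarrow> (\<And>j. j \<in> S \<Longrightarrow> smooth_on U (F j)) \<Longrightarrow> smooth_on U (\<lambda>y. \<Sum>j\<in>S. F j y)"
  unfolding smooth_Ck using Ck_sum by blast
lemma smooth_prod: "open U \<Longrightarrow> finite S \<Longrightarrow> (\<And>j. j \<in> S \<Longrightarrow> smooth_on U (F j)) \<Longrightarrow> smooth_on U (\<lambda>y. \<Prod>j\<in>S. F j y)"
  unfolding smooth_Ck using Ck_prod by blast
lemma smooth_inverse: "open U \<Longrightarrow> smooth_on U a \<Longrightarrow> (\<forall>y\<in>U. a y \<noteq> 0) \<Longrightarrow> smooth_on U (\<lambda>y. inverse (a y))"
  unfolding smooth_Ck using Ck_inverse by blast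
lemma smooth_pd: "smooth_on U h \<Longrightarrow> smooth_on U (pd i h)"
  unfolding smooth_Ck using Ck_pd by blast
lemma smooth_diff: "smooth_on U h \<Longrightarrow> x \<in> U \<Longrightarrow> h differentiable (at x)"
  unfolding smooth_Ck using Ck_diff by blast
lemma smooth_local: "open U \<Longrightarrow> smooth_on U a \<Longrightarrow> (\<And>y. y \<in> U \<Longrightarrow> a y = b y) \<Longrightarrow> smooth_on U b"
  unfolding smooth_Ck using Ck_local by blast


lemma dist_add_self: "dist x (x + w) = norm (w::'a::real_normed_vector)"
  by (simp add: dist_norm)

lemma schwarz_est:
  fixes h :: "'n::finite scalarf"
  assumes U: "open U" "x \<in> U" and hd: "\<forall>y\<in>U. h differentiable (at y)"
    and hi: "pd i h differentiable (at x)" and e: "e > 0"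
  shows "\<exists>d>0. \<forall>t. 0 < t \<and> t < d \<longrightarrow>
     \<bar>(h (x + t *\<^sub>R axis i 1 + t *\<^sub>R axis j 1) - h (x + t *\<^sub>R axis i 1) - h (x + t *\<^sub>R axis j 1) + h x)
       - t^2 * pd j (pd i h) x\<bar> \<le> e * t^2"
proof -
  define L where "L = frechet_derivative (pd i h) (at x)"
  have L: "(pd i h has_derivative L) (at x)" using hi frechet_derivative_works L_def by blast
  have bl: "bounded_linear L" using L has_derivative_bounded_linear by blast
  obtain d1 where d1: "d1 > 0" and d1b: "\<And>y. norm (y - x) < d1 \<Longrightarrow>
      norm (pd i h y - pd i h x - L (y - x)) \<le> (e/3) * norm (y - x)"
    using L[unfolded has_derivative_at_alt] e by (meson divide_pos_pos zero_less_numeral)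
  obtain r where r: "r > 0" "ball x r \<subseteq> U" using U open_contains_ball by blast
  define d where "d = min (d1/2) (r/2)"
  have "d > 0" using d1 r by (simp add: d_def)
  moreover have "\<bar>(h (x + t *\<^sub>R axis i 1 + t *\<^sub>R axis j 1) - h (x + t *\<^sub>R axis i 1) - h (x + t *\<^sub>R axis j 1) + h x)
       - t^2 * pd j (pd i h) x\<bar> \<le> e * t^2" if t: "0 < t" "t < d" for t
  proof -
    define ei :: "real^'n" where "ei = axis i 1"
    define ej :: "real^'n" where "ej = axis j 1"
    have nei: "norm ei = 1" "norm ej = 1" by (simp_all add: ei_def ej_def)
    define \<phi> where "\<phi> s = h (x + s *\<^sub>R ei + t *\<^sub>R ej) - h (x + s *\<^sub>R ei)" for s
    define \<phi>' where "\<phi>' s = (\<lambda>u. frechet_derivative h (at (x + s *\<^sub>R ei + t *\<^sub>R ej)) (u *\<^sub>R ei)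
                             - frechet_derivative h (at (x + s *\<^sub>R ei)) (u *\<^sub>R ei))" for s
    have inU: "x + s *\<^sub>R ei + t *\<^sub>R ej \<in> U" "x + s *\<^sub>R ei \<in> U" if "0 \<le> s" "s \<le> t" for s
    proof -
      have "norm (s *\<^sub>R ei + t *\<^sub>R ej) \<le> norm (s *\<^sub>R ei) + norm (t *\<^sub>R ej)" by (rule norm_triangle_ineq)
      also have "\<dots> = s + t" using nei that t by simp
      finally have "norm (s *\<^sub>R ei + t *\<^sub>R ej) < r" using that t by (simp add: d_def)
      moreover have "dist x (x + (s *\<^sub>R ei + t *\<^sub>R ej)) = norm (s *\<^sub>R ei + t *\<^sub>R ej)"
        by (rule dist_add_self)
      ultimately show "x + s *\<^sub>R ei + t *\<^sub>R ej \<in> U" using r by (auto simp: add.assoc)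
      have "norm (s *\<^sub>R ei) < r" using nei that t by (simp add: d_def)
      then show "x + s *\<^sub>R ei \<in> U" using r by (auto simp: dist_norm)
    qed
    have der: "(\<phi> has_derivative \<phi>' s) (at s within {0..t})" if "0 \<le> s" "s \<le> t" for s
    proof -
      have g1: "((\<lambda>s. x + s *\<^sub>R ei + t *\<^sub>R ej) has_derivative (\<lambda>u. u *\<^sub>R ei)) (at s within {0..t})"
        by (auto intro!: derivative_eq_intros)
      have g2: "((\<lambda>s. x + s *\<^sub>R ei) has_derivative (\<lambda>u. u *\<^sub>R ei)) (at s within {0..t})"
        by (auto intro!: derivative_eq_intros)
      have h1: "(h has_derivative frechet_derivative h (at (x + s *\<^sub>R ei + t *\<^sub>R ej))) (at (x + s *\<^sub>R ei + t *\<^sub>R ej))"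
        using hd inU[OF that] frechet_derivative_works by blast
      have h2: "(h has_derivative frechet_derivative h (at (x + s *\<^sub>R ei))) (at (x + s *\<^sub>R ei))"
        using hd inU[OF that] frechet_derivative_works by blast
      show ?thesis unfolding \<phi>_def \<phi>'_def
        using has_derivative_diff[OF has_derivative_compose[OF g1 h1] has_derivative_compose[OF g2 h2]] .
    qed
    obtain \<xi> where \<xi>: "\<xi> \<in> {0<..<t}" and mvt: "\<phi> t - \<phi> 0 = \<phi>' \<xi> (t - 0)"
      using mvt_simple[of 0 t \<phi> \<phi>'] der t by auto
    define p1 where "p1 = x + \<xi> *\<^sub>R ei + t *\<^sub>R ej"
    define p2 where "p2 = x + \<xi> *\<^sub>R ei"
    have p1U: "p1 \<in> U" and p2U: "p2 \<in> U" using inU[of \<xi>] \<xi> by (auto simp: p1_def p2_def)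
    have lin1: "linear (frechet_derivative h (at p1))" "linear (frechet_derivative h (at p2))"
      using hd p1U p2U frechet_derivative_works has_derivative_linear by blast+
    have "\<phi>' \<xi> t = frechet_derivative h (at p1) (t *\<^sub>R ei) - frechet_derivative h (at p2) (t *\<^sub>R ei)"
      unfolding \<phi>'_def p1_def p2_def by simp
    also have "\<dots> = t * (pd i h p1 - pd i h p2)"
      unfolding pd_def ei_def[symmetric]
      using linear_scale[OF lin1(1)] linear_scale[OF lin1(2)] by (simp add: algebra_simps)
    finally have "\<phi>' \<xi> t = t * (pd i h p1 - pd i h p2)" .
    then have Dt: "h (x + t *\<^sub>R axis i 1 + t *\<^sub>R axis j 1) - h (x + t *\<^sub>R axis i 1) - h (x + t *\<^sub>R axis j 1) + h x
        = t * (pd i h p1 - pd i h p2)"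
      using mvt unfolding \<phi>_def ei_def ej_def by simp
    have n1: "norm (p1 - x) \<le> 2 * t"
    proof -
      have "p1 - x = \<xi> *\<^sub>R ei + t *\<^sub>R ej" unfolding p1_def by simp
      then have "norm (p1 - x) \<le> norm (\<xi> *\<^sub>R ei) + norm (t *\<^sub>R ej)"
        using norm_triangle_ineq by metis
      then show ?thesis using nei \<xi> by simp
    qed
    have n2: "norm (p2 - x) \<le> t" using nei \<xi> by (simp add: p2_def)
    have e1: "\<bar>pd i h p1 - pd i h x - L (p1 - x)\<bar> \<le> (e/3) * (2 * t)"
    proof -
      have "norm (p1 - x) < d1" using n1 t by (simp add: d_def)
      then have "\<bar>pd i h p1 - pd i h x - L (p1 - x)\<bar> \<le> (e/3) * norm (p1 - x)" using d1b by fastforce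
      also have "\<dots> \<le> (e/3) * (2 * t)" using n1 e by (intro mult_left_mono) auto
      finally show ?thesis .
    qed
    have e2: "\<bar>pd i h p2 - pd i h x - L (p2 - x)\<bar> \<le> (e/3) * t"
    proof -
      have "norm (p2 - x) < d1" using n2 t by (simp add: d_def)
      then have "\<bar>pd i h p2 - pd i h x - L (p2 - x)\<bar> \<le> (e/3) * norm (p2 - x)" using d1b by fastforce
      also have "\<dots> \<le> (e/3) * t" using n2 e by (intro mult_left_mono) auto
      finally show ?thesis .
    qed
    have Ldiff: "L (p1 - x) - L (p2 - x) = t * pd j (pd i h) x"
    proof -
      have "L (p1 - x) - L (p2 - x) = L ((p1 - x) - (p2 - x))" using linear_diff[OF bounded_linear.linear[OF bl]] by simp
      also have "(p1 - x) - (p2 - x) = t *\<^sub>R ej" by (simp add: p1_def p2_def)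
      also have "L (t *\<^sub>R ej) = t * L ej" using linear_scale[OF bounded_linear.linear[OF bl]] by simp
      finally show ?thesis by (simp add: L_def pd_def ej_def)
    qed
    have "\<bar>(pd i h p1 - pd i h p2) - t * pd j (pd i h) x\<bar> \<le> e * t"
    proof -
      have ee: "(e/3) * (2 * t) + (e/3) * t = e * t" by (simp add: field_simps)
      show ?thesis using e1[unfolded abs_le_iff] e2[unfolded abs_le_iff] Ldiff ee unfolding abs_le_iff by linarith
    qed
    then have "\<bar>t * (pd i h p1 - pd i h p2) - t^2 * pd j (pd i h) x\<bar> \<le> t * (e * t)"
    proof -
      assume a: "\<bar>(pd i h p1 - pd i h p2) - t * pd j (pd i h) x\<bar> \<le> e * t"
      have "t * (pd i h p1 - pd i h p2) - t^2 * pd j (pd i h) x = t * ((pd i h p1 - pd i h p2) - t * pd j (pd i h) x)"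
        by (simp add: algebra_simps power2_eq_square)
      then have "\<bar>t * (pd i h p1 - pd i h p2) - t^2 * pd j (pd i h) x\<bar> = t * \<bar>(pd i h p1 - pd i h p2) - t * pd j (pd i h) x\<bar>"
        using t by (simp add: abs_mult)
      also have "\<dots> \<le> t * (e * t)" using a t by (intro mult_left_mono) auto
      finally show ?thesis .
    qed
    then show ?thesis using Dt by (simp add: power2_eq_square mult_ac)
  qed
  ultimately show ?thesis by blast
qed

lemma schwarz:
  fixes h :: "'n::finite scalarf"
  assumes U: "open U" "x \<in> U" and hd: "\<forall>y\<in>U. h differentiable (at y)"
    and hi: "pd i h differentiable (at x)" and hj: "pd j h differentiable (at x)"
  shows "pd j (pd i h) x = pd i (pd j h) x"
proof (rule ccontr)
  let ?c1 = "pd j (pd i h) x" and ?c2 = "pd i (pd j h) x"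
  assume ne: "?c1 \<noteq> ?c2"
  define e where "e = \<bar>?c1 - ?c2\<bar> / 4"
  have e: "e > 0" using ne by (simp add: e_def)
  obtain d1 where d1: "d1 > 0" and E1: "\<And>t. 0 < t \<Longrightarrow> t < d1 \<Longrightarrow>
     \<bar>(h (x + t *\<^sub>R axis i 1 + t *\<^sub>R axis j 1) - h (x + t *\<^sub>R axis i 1) - h (x + t *\<^sub>R axis j 1) + h x)
       - t^2 * ?c1\<bar> \<le> e * t^2"
    using schwarz_est[OF U hd hi e, of j] by blast
  obtain d2 where d2: "d2 > 0" and E2: "\<And>t. 0 < t \<Longrightarrow> t < d2 \<Longrightarrow>
     \<bar>(h (x + t *\<^sub>R axis j 1 + t *\<^sub>R axis i 1) - h (x + t *\<^sub>R axis j 1) - h (x + t *\<^sub>R axis i 1) + h x)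
       - t^2 * ?c2\<bar> \<le> e * t^2"
    using schwarz_est[OF U hd hj e, of i] by blast
  define t where "t = min d1 d2 / 2"
  have t: "0 < t" "t < d1" "t < d2" using d1 d2 by (auto simp: t_def)
  have "x + t *\<^sub>R axis j 1 + t *\<^sub>R axis i 1 = x + t *\<^sub>R axis i 1 + t *\<^sub>R axis j 1" by (simp add: algebra_simps)
  then have "\<bar>t^2 * ?c1 - t^2 * ?c2\<bar> \<le> 2 * e * t^2"
    using E1[OF t(1,2)] E2[OF t(1,3)] by (simp add: abs_le_iff algebra_simps)
  then have "t^2 * \<bar>?c1 - ?c2\<bar> \<le> t^2 * (2 * e)"
    by (simp add: abs_mult right_diff_distrib[symmetric] mult_ac)
  then have "\<bar>?c1 - ?c2\<bar> \<le> 2 * e" using t by (simp add: mult_le_cancel_left)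
  then show False using e by (simp add: e_def)
qed


lemma det_smooth:
  assumes "open U" "\<And>i l. smooth_on U (\<lambda>y. M y $ i $ l)"
  shows "smooth_on U (\<lambda>y. det (M y :: real^'n::finite^'n))"
proof -
  have "smooth_on U (\<lambda>y. \<Sum>p\<in>{p. p permutes (UNIV::'n set)}. of_int (sign p) * (\<Prod>i\<in>UNIV. M y $ i $ p i))"
    using assms by (intro smooth_sum smooth_cmult smooth_prod finite_permutations) auto
  then show ?thesis unfolding det_def .
qed

lemma sum_delta_r[simp]: "(\<Sum>l\<in>UNIV. X l * (if l = b then 1 else 0)) = (X b :: real)" for X :: "'a::finite \<Rightarrow> real"
proof -
  have "(\<Sum>l\<in>UNIV. X l * (if l = b then 1 else 0)) = (\<Sum>l\<in>UNIV. if l = b then X l else 0)"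
    by (intro sum.cong) auto
  then show ?thesis by simp
qed
lemma sum_delta_l[simp]: "(\<Sum>l\<in>UNIV. (if b = l then 1 else 0) * X l) = (X b :: real)" for X :: "'a::finite \<Rightarrow> real"
proof -
  have "(\<Sum>l\<in>UNIV. (if b = l then 1 else 0) * X l) = (\<Sum>l\<in>UNIV. if l = b then X l else 0)"
    by (intro sum.cong) auto
  then show ?thesis by simp
qed
lemma sum_delta_r'[simp]: "(\<Sum>l\<in>UNIV. X l * (if b = l then 1 else 0)) = (X b :: real)" for X :: "'a::finite \<Rightarrow> real"
proof -
  have "(\<Sum>l\<in>UNIV. X l * (if b = l then 1 else 0)) = (\<Sum>l\<in>UNIV. if l = b then X l else 0)"
    by (intro sum.cong) auto
  then show ?thesis by simp
qed
lemma sum_delta_l'[simp]: "(\<Sum>l\<in>UNIV. (if l = b then 1 else 0) * X l) = (X b :: real)" for X :: "'a::finite \<Rightarrow> real"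
proof -
  have "(\<Sum>l\<in>UNIV. (if l = b then 1 else 0) * X l) = (\<Sum>l\<in>UNIV. if l = b then X l else 0)"
    by (intro sum.cong) auto
  then show ?thesis by simp
qed

locale rmet =
  fixes U :: "(real^'n::finite) set" and g :: "'n metric"
  assumes U_open: "open U" and rg: "riemannian_metric_on U g"
begin

lemma G_smooth: "smooth_on U (\<lambda>y. g y $ a $ b)"
  using rg unfolding riemannian_metric_on_def by blast

lemma G_sym: "y \<in> U \<Longrightarrow> g y $ a $ b = g y $ b $ a"
proof -
  assume "y \<in> U"
  then have "transpose (g y) = g y" using rg unfolding riemannian_metric_on_def by blast
  then have "transpose (g y) $ b $ a = g y $ b $ a" by simp
  then show ?thesis by (simp add: transpose_def)
qed

lemma g_invertible: "y \<in> U \<Longrightarrow> invertible (g y)"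
proof -
  assume y: "y \<in> U"
  have pos: "\<And>v. v \<noteq> 0 \<Longrightarrow> v \<bullet> (g y *v v) > 0" using rg y unfolding riemannian_metric_on_def by blast
  have "inj ((*v) (g y))"
  proof (rule injI)
    fix u v assume "g y *v u = g y *v v"
    then have "g y *v (u - v) = 0" by (simp add: matrix_vector_mult_diff_distrib)
    then show "u = v" using pos[of "u - v"] by fastforce
  qed
  then obtain B where "B ** g y = mat 1" using matrix_left_invertible_injective by blast
  then have "g y ** B = mat 1" "B ** g y = mat 1" using matrix_left_right_inverse by blast+
  then show ?thesis unfolding invertible_def by blast
qed

lemma ginv_props: "y \<in> U \<Longrightarrow> g y ** ginv g y = mat 1 \<and> ginv g y ** g y = mat 1"
proof -
  assume "y \<in> U"
  then have "\<exists>A'. g y ** A' = mat 1 \<and> A' ** g y = mat 1" using g_invertible invertible_def by blast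
  then show ?thesis unfolding ginv_def matrix_inv_def by (rule someI_ex)
qed

lemma HG: "y \<in> U \<Longrightarrow> (\<Sum>b\<in>UNIV. ginv g y $ a $ b * g y $ b $ c) = (if a = c then 1 else 0)"
proof -
  assume "y \<in> U"
  then have "(ginv g y ** g y) $ a $ c = mat 1 $ a $ c" using ginv_props by simp
  then show ?thesis by (simp add: matrix_matrix_mult_def mat_def)
qed

lemma GH: "y \<in> U \<Longrightarrow> (\<Sum>b\<in>UNIV. g y $ a $ b * ginv g y $ b $ c) = (if a = c then 1 else 0)"
proof -
  assume "y \<in> U"
  then have "(g y ** ginv g y) $ a $ c = mat 1 $ a $ c" using ginv_props by simp
  then show ?thesis by (simp add: matrix_matrix_mult_def mat_def)
qed

lemma H_sym: "y \<in> U \<Longrightarrow> ginv g y $ a $ b = ginv g y $ b $ a"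
proof -
  assume y: "y \<in> U"
  let ?A = "g y" and ?B = "ginv g y"
  have tA: "transpose ?A = ?A" using rg y unfolding riemannian_metric_on_def by blast
  have "transpose (?A ** ?B) = mat 1" using ginv_props[OF y] by simp
  then have "transpose ?B ** ?A = mat 1" using tA by (simp add: matrix_transpose_mul)
  then have "transpose ?B = ?B"
    using ginv_props[OF y] by (metis matrix_mul_assoc matrix_mul_lid matrix_mul_rid)
  then have "transpose ?B $ b $ a = ?B $ b $ a" by simp
  then show ?thesis by (simp add: transpose_def)
qed

lemma H_cramer: "y \<in> U \<Longrightarrow> ginv g y $ k $ j
   = det (\<chi> i l. if l = k then axis j 1 $ i else g y $ i $ l) * inverse (det (g y))"
proof -
  assume y: "y \<in> U"
  have d0: "det (g y) \<noteq> 0" using g_invertible[OF y] invertible_det_nz by blast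
  have "g y *v (ginv g y *v axis j 1) = axis j 1"
    using ginv_props[OF y] by (simp add: matrix_vector_mul_assoc)
  then have "ginv g y *v axis j 1 = (\<chi> k. det (\<chi> i l. if l = k then axis j 1 $ i else g y $ i $ l) / det (g y))"
    using cramer[OF d0] by blast
  then have "(ginv g y *v axis j 1) $ k = det (\<chi> i l. if l = k then axis j 1 $ i else g y $ i $ l) / det (g y)"
    by simp
  moreover have "(ginv g y *v axis j 1) $ k = ginv g y $ k $ j"
    by (simp add: matrix_vector_mult_basis column_def)
  ultimately show ?thesis by (simp add: divide_inverse)
qed

lemma H_smooth: "smooth_on U (\<lambda>y. ginv g y $ a $ b)"
proof -
  have s1: "smooth_on U (\<lambda>y. det (\<chi> i l. if l = a then axis b 1 $ i else g y $ i $ l))"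
  proof (intro det_smooth U_open)
    fix i l show "smooth_on U (\<lambda>y. (\<chi> i l. if l = a then axis b 1 $ i else g y $ i $ l) $ i $ l)"
      by (cases "l = a") (simp_all add: G_smooth smooth_const)
  qed
  have s2: "smooth_on U (\<lambda>y. inverse (det (g y)))"
    using U_open g_invertible invertible_det_nz by (intro smooth_inverse det_smooth G_smooth) auto
  have "smooth_on U (\<lambda>y. det (\<chi> i l. if l = a then axis b 1 $ i else g y $ i $ l) * inverse (det (g y)))"
    using smooth_mult[OF U_open s1 s2] .
  then show ?thesis using smooth_local[OF U_open] H_cramer by (metis (no_types, lifting))
qed

end


type_synonym 'n mat2 = "'n \<Rightarrow> 'n \<Rightarrow> real"

definition mm :: "'n::finite mat2 \<Rightarrow> 'n mat2 \<Rightarrow> 'n mat2" where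
  "mm X Y = (\<lambda>a b. \<Sum>p\<in>UNIV. X a p * Y p b)"

lemma mm_assoc: "mm (mm X Y) Z = mm X (mm Y Z)"
  unfolding mm_def
  by (auto simp: fun_eq_iff sum_distrib_left sum_distrib_right mult.assoc intro: sum.swap)

lemma mm_add_l: "mm (X + Y) Z = mm X Z + mm Y Z"
  unfolding mm_def by (auto simp: fun_eq_iff sum.distrib algebra_simps)
lemma mm_add_r: "mm X (Y + Z) = mm X Y + mm X Z"
  unfolding mm_def by (auto simp: fun_eq_iff sum.distrib algebra_simps)
lemma mm_diff_l: "mm (X - Y) Z = mm X Z - mm Y Z"
  unfolding mm_def by (auto simp: fun_eq_iff sum_subtractf algebra_simps)
lemma mm_diff_r: "mm X (Y - Z) = mm X Y - mm X Z"
  unfolding mm_def by (auto simp: fun_eq_iff sum_subtractf algebra_simps)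

lemma bianchi_ring:
  fixes A :: "'c \<Rightarrow> 'n::finite mat2" and dA :: "'c \<Rightarrow> 'c \<Rightarrow> 'n mat2" and ddA :: "'c \<Rightarrow> 'c \<Rightarrow> 'c \<Rightarrow> 'n mat2"
  assumes sym: "\<And>e c d. ddA e c d = ddA c e d"
  defines "RM \<equiv> \<lambda>c d. dA c d - dA d c + mm (A c) (A d) - mm (A d) (A c)"
  defines "dRM \<equiv> \<lambda>e c d. ddA e c d - ddA e d c + mm (dA e c) (A d) + mm (A c) (dA e d)
                          - mm (dA e d) (A c) - mm (A d) (dA e c)"
  shows "(dRM e c d + mm (A e) (RM c d) - mm (RM c d) (A e))
       + (dRM c d e + mm (A c) (RM d e) - mm (RM d e) (A c))
       + (dRM d e c + mm (A d) (RM e c) - mm (RM e c) (A d)) = 0"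
proof -
  have s1: "ddA c e d = ddA e c d" "ddA d c e = ddA c d e" "ddA e d c = ddA d e c" using sym by auto
  show ?thesis unfolding RM_def dRM_def
    by (simp add: mm_add_l mm_add_r mm_diff_l mm_diff_r mm_assoc s1 algebra_simps)
qed


type_synonym 'n chr = "'n \<Rightarrow> 'n \<Rightarrow> 'n \<Rightarrow> real"
type_synonym 'n dchr = "'n \<Rightarrow> 'n \<Rightarrow> 'n \<Rightarrow> 'n \<Rightarrow> real"
type_synonym 'n ddchr = "'n \<Rightarrow> 'n \<Rightarrow> 'n \<Rightarrow> 'n \<Rightarrow> 'n \<Rightarrow> real"

definition Rmf :: "'n::finite chr \<Rightarrow> 'n dchr \<Rightarrow> 'n \<Rightarrow> 'n \<Rightarrow> 'n \<Rightarrow> 'n \<Rightarrow> real" where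
  "Rmf Ga dGa a b c d = dGa c a d b - dGa d a c b + (\<Sum>p\<in>UNIV. Ga a c p * Ga p d b - Ga a d p * Ga p c b)"

definition dRmf :: "'n::finite chr \<Rightarrow> 'n dchr \<Rightarrow> 'n ddchr \<Rightarrow> 'n \<Rightarrow> 'n \<Rightarrow> 'n \<Rightarrow> 'n \<Rightarrow> 'n \<Rightarrow> real" where
  "dRmf Ga dGa ddGa e a b c d = ddGa e c a d b - ddGa e d a c b
     + (\<Sum>p\<in>UNIV. dGa e a c p * Ga p d b + Ga a c p * dGa e p d b - dGa e a d p * Ga p c b - Ga a d p * dGa e p c b)"

definition DRmf :: "'n::finite chr \<Rightarrow> 'n dchr \<Rightarrow> 'n ddchr \<Rightarrow> 'n \<Rightarrow> 'n \<Rightarrow> 'n \<Rightarrow> 'n \<Rightarrow> 'n \<Rightarrow> real" where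
  "DRmf Ga dGa ddGa e a b c d = dRmf Ga dGa ddGa e a b c d
     + (\<Sum>p\<in>UNIV. Ga a e p * Rmf Ga dGa p b c d - Ga p e b * Rmf Ga dGa a p c d
                  - Ga p e c * Rmf Ga dGa a b p d - Ga p e d * Rmf Ga dGa a b c p)"

lemma Rmf_antisym: "Rmf Ga dGa a b c d = - Rmf Ga dGa a b d c"
  unfolding Rmf_def by (simp add: sum_subtractf sum_negf[symmetric] algebra_simps)

lemma dRmf_antisym: "dRmf Ga dGa ddGa e a b c d = - dRmf Ga dGa ddGa e a b d c"
  unfolding dRmf_def by (simp add: sum_subtractf sum.distrib algebra_simps)

lemma DRmf_antisym: "DRmf Ga dGa ddGa e a b c d = - DRmf Ga dGa ddGa e a b d c"
proof -
  have "\<And>p. Ga a e p * Rmf Ga dGa p b c d - Ga p e b * Rmf Ga dGa a p c d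
                  - Ga p e c * Rmf Ga dGa a b p d - Ga p e d * Rmf Ga dGa a b c p
      = - (Ga a e p * Rmf Ga dGa p b d c - Ga p e b * Rmf Ga dGa a p d c
                  - Ga p e d * Rmf Ga dGa a b p c - Ga p e c * Rmf Ga dGa a b d p)"
  proof -
    fix p
    have "Rmf Ga dGa p b d c = - Rmf Ga dGa p b c d" "Rmf Ga dGa a p d c = - Rmf Ga dGa a p c d"
      "Rmf Ga dGa a b p c = - Rmf Ga dGa a b c p" "Rmf Ga dGa a b d p = - Rmf Ga dGa a b p d"
      by (rule Rmf_antisym)+
    then show "Ga a e p * Rmf Ga dGa p b c d - Ga p e b * Rmf Ga dGa a p c d
                  - Ga p e c * Rmf Ga dGa a b p d - Ga p e d * Rmf Ga dGa a b c p
      = - (Ga a e p * Rmf Ga dGa p b d c - Ga p e b * Rmf Ga dGa a p d c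
                  - Ga p e d * Rmf Ga dGa a b p c - Ga p e c * Rmf Ga dGa a b d p)" by simp
  qed
  then have "(\<Sum>p\<in>UNIV. Ga a e p * Rmf Ga dGa p b c d - Ga p e b * Rmf Ga dGa a p c d
                  - Ga p e c * Rmf Ga dGa a b p d - Ga p e d * Rmf Ga dGa a b c p)
      = - (\<Sum>p\<in>UNIV. Ga a e p * Rmf Ga dGa p b d c - Ga p e b * Rmf Ga dGa a p d c
                  - Ga p e d * Rmf Ga dGa a b p c - Ga p e c * Rmf Ga dGa a b d p)"
    by (simp add: sum_negf[symmetric])
  then show ?thesis unfolding DRmf_def using dRmf_antisym[of Ga dGa ddGa e a b c d] by simp
qed

lemma bianchi2:
  fixes Ga :: "'n::finite chr"
  assumes Gsym: "\<And>a c b. Ga a c b = Ga a b c"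
    and ddsym: "\<And>e f a c b. ddGa e f a c b = ddGa f e a c b"
  shows "DRmf Ga dGa ddGa e a b c d + DRmf Ga dGa ddGa c a b d e + DRmf Ga dGa ddGa d a b e c = 0"
proof -
  define A where "A = (\<lambda>c a b. Ga a c b)"
  define dA where "dA = (\<lambda>e c a b. dGa e a c b)"
  define ddA where "ddA = (\<lambda>e f c a b. ddGa e f a c b)"
  define RM where "RM = (\<lambda>c d. dA c d - dA d c + mm (A c) (A d) - mm (A d) (A c))"
  define dRM where "dRM = (\<lambda>e c d. ddA e c d - ddA e d c + mm (dA e c) (A d) + mm (A c) (dA e d)
                          - mm (dA e d) (A c) - mm (A d) (dA e c))"
  have symA: "\<And>e c d. ddA e c d = ddA c e d" unfolding ddA_def using ddsym by (simp add: fun_eq_iff)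
  have ring: "(dRM e c d + mm (A e) (RM c d) - mm (RM c d) (A e))
       + (dRM c d e + mm (A c) (RM d e) - mm (RM d e) (A c))
       + (dRM d e c + mm (A d) (RM e c) - mm (RM e c) (A d)) = 0"
    unfolding RM_def dRM_def by (rule bianchi_ring[OF symA])
  have RMe: "RM c d a b = Rmf Ga dGa a b c d" for a b c d
    unfolding RM_def Rmf_def A_def dA_def mm_def by (simp add: sum_subtractf)
  have dRMe: "dRM e c d a b = dRmf Ga dGa ddGa e a b c d" for e a b c d
    unfolding dRM_def dRmf_def A_def dA_def ddA_def mm_def by (simp add: sum_subtractf sum.distrib)
  have DRe: "DRmf Ga dGa ddGa e a b c d = (dRM e c d + mm (A e) (RM c d) - mm (RM c d) (A e)) a b
       - (\<Sum>p\<in>UNIV. Ga p e c * Rmf Ga dGa a b p d + Ga p e d * Rmf Ga dGa a b c p)" for e a b c d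
  proof -
    have "(\<Sum>p\<in>UNIV. Ga a e p * Rmf Ga dGa p b c d - Ga p e b * Rmf Ga dGa a p c d
                  - Ga p e c * Rmf Ga dGa a b p d - Ga p e d * Rmf Ga dGa a b c p)
        = (\<Sum>p\<in>UNIV. Ga a e p * Rmf Ga dGa p b c d) - (\<Sum>p\<in>UNIV. Rmf Ga dGa a p c d * Ga p e b)
          - (\<Sum>p\<in>UNIV. Ga p e c * Rmf Ga dGa a b p d + Ga p e d * Rmf Ga dGa a b c p)"
      by (simp add: sum_subtractf sum.distrib mult.commute)
    moreover have "(dRM e c d + mm (A e) (RM c d) - mm (RM c d) (A e)) a b
       = dRmf Ga dGa ddGa e a b c d + (\<Sum>p\<in>UNIV. Ga a e p * Rmf Ga dGa p b c d) - (\<Sum>p\<in>UNIV. Rmf Ga dGa a p c d * Ga p e b)"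
      by (simp add: mm_def RMe dRMe A_def)
    ultimately show ?thesis unfolding DRmf_def by simp
  qed
  have T: "(\<Sum>p\<in>UNIV. Ga p e c * Rmf Ga dGa a b p d + Ga p e d * Rmf Ga dGa a b c p)
         + (\<Sum>p\<in>UNIV. Ga p c d * Rmf Ga dGa a b p e + Ga p c e * Rmf Ga dGa a b d p)
         + (\<Sum>p\<in>UNIV. Ga p d e * Rmf Ga dGa a b p c + Ga p d c * Rmf Ga dGa a b e p) = 0"
  proof -
    have "\<And>p. (Ga p e c * Rmf Ga dGa a b p d + Ga p e d * Rmf Ga dGa a b c p)
         + (Ga p c d * Rmf Ga dGa a b p e + Ga p c e * Rmf Ga dGa a b d p)
         + (Ga p d e * Rmf Ga dGa a b p c + Ga p d c * Rmf Ga dGa a b e p) = 0"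
    proof -
      fix p
      have "Ga p c e = Ga p e c" "Ga p d c = Ga p c d" "Ga p d e = Ga p e d" using Gsym by auto
      moreover have "Rmf Ga dGa a b d p = - Rmf Ga dGa a b p d" "Rmf Ga dGa a b p c = - Rmf Ga dGa a b c p"
        "Rmf Ga dGa a b e p = - Rmf Ga dGa a b p e" by (rule Rmf_antisym)+
      ultimately show "(Ga p e c * Rmf Ga dGa a b p d + Ga p e d * Rmf Ga dGa a b c p)
         + (Ga p c d * Rmf Ga dGa a b p e + Ga p c e * Rmf Ga dGa a b d p)
         + (Ga p d e * Rmf Ga dGa a b p c + Ga p d c * Rmf Ga dGa a b e p) = 0" by simp
    qed
    then show ?thesis by (simp add: sum.distrib[symmetric])
  qed
  have "0 = (dRM e c d + mm (A e) (RM c d) - mm (RM c d) (A e)) a b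
       + (dRM c d e + mm (A c) (RM d e) - mm (RM d e) (A c)) a b
       + (dRM d e c + mm (A d) (RM e c) - mm (RM e c) (A d)) a b"
    using fun_cong[OF fun_cong[OF ring, of a], of b] by simp
  then show ?thesis using T unfolding DRe by linarith
qed


lemma sum_swap3: "(\<Sum>x\<in>UNIV. \<Sum>y\<in>UNIV. \<Sum>z\<in>UNIV. F x y z) = (\<Sum>z\<in>UNIV. \<Sum>y\<in>UNIV. \<Sum>x\<in>UNIV. (F x y z :: real))"
proof -
  have "(\<Sum>x\<in>UNIV. \<Sum>y\<in>UNIV. \<Sum>z\<in>UNIV. F x y z) = (\<Sum>x\<in>UNIV. \<Sum>z\<in>UNIV. \<Sum>y\<in>UNIV. F x y z)"
    by (rule sum.cong[OF refl]) (rule sum.swap)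
  also have "\<dots> = (\<Sum>z\<in>UNIV. \<Sum>x\<in>UNIV. \<Sum>y\<in>UNIV. F x y z)" by (rule sum.swap)
  also have "\<dots> = (\<Sum>z\<in>UNIV. \<Sum>y\<in>UNIV. \<Sum>x\<in>UNIV. F x y z)"
    by (rule sum.cong[OF refl]) (rule sum.swap)
  finally show ?thesis .
qed

lemma sum_swap_in: "(\<Sum>x\<in>UNIV. \<Sum>y\<in>UNIV. \<Sum>z\<in>UNIV. F x y z) = (\<Sum>x\<in>UNIV. \<Sum>z\<in>UNIV. \<Sum>y\<in>UNIV. (F x y z :: real))"
  by (rule sum.cong[OF refl]) (rule sum.swap)

definition Ricf :: "'n::finite chr \<Rightarrow> 'n dchr \<Rightarrow> 'n \<Rightarrow> 'n \<Rightarrow> real" where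
  "Ricf Ga dGa b d = (\<Sum>a\<in>UNIV. Rmf Ga dGa a b a d)"

definition dRicf :: "'n::finite chr \<Rightarrow> 'n dchr \<Rightarrow> 'n ddchr \<Rightarrow> 'n \<Rightarrow> 'n \<Rightarrow> 'n \<Rightarrow> real" where
  "dRicf Ga dGa ddGa e b d = (\<Sum>a\<in>UNIV. dRmf Ga dGa ddGa e a b a d)"

definition nT :: "'n::finite chr \<Rightarrow> ('n \<Rightarrow> 'n \<Rightarrow> real) \<Rightarrow> ('n \<Rightarrow> 'n \<Rightarrow> 'n \<Rightarrow> real) \<Rightarrow> 'n \<Rightarrow> 'n \<Rightarrow> 'n \<Rightarrow> real" where
  "nT Ga T dT e b d = dT e b d - (\<Sum>p\<in>UNIV. Ga p e b * T p d + Ga p e d * T b p)"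

lemma algA: "(\<Sum>a\<in>UNIV. DRmf Ga dGa ddGa e a b a d) = nT Ga (Ricf Ga dGa) (dRicf Ga dGa ddGa) e b d"
proof -
  let ?R = "Rmf Ga dGa"
  have "(\<Sum>a\<in>UNIV. DRmf Ga dGa ddGa e a b a d) = (\<Sum>a\<in>UNIV. dRmf Ga dGa ddGa e a b a d)
     + (\<Sum>a\<in>UNIV. \<Sum>p\<in>UNIV. Ga a e p * ?R p b a d) - (\<Sum>a\<in>UNIV. \<Sum>p\<in>UNIV. Ga p e b * ?R a p a d)
     - (\<Sum>a\<in>UNIV. \<Sum>p\<in>UNIV. Ga p e a * ?R a b p d) - (\<Sum>a\<in>UNIV. \<Sum>p\<in>UNIV. Ga p e d * ?R a b a p)"
    by (simp add: DRmf_def sum.distrib sum_subtractf)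
  moreover have "(\<Sum>a\<in>UNIV. \<Sum>p\<in>UNIV. Ga p e a * ?R a b p d) = (\<Sum>a\<in>UNIV. \<Sum>p\<in>UNIV. Ga a e p * ?R p b a d)"
    by (rule sum.swap)
  moreover have "(\<Sum>a\<in>UNIV. \<Sum>p\<in>UNIV. Ga p e b * ?R a p a d) = (\<Sum>p\<in>UNIV. Ga p e b * Ricf Ga dGa p d)"
    unfolding Ricf_def sum_distrib_left by (rule sum.swap)
  moreover have "(\<Sum>a\<in>UNIV. \<Sum>p\<in>UNIV. Ga p e d * ?R a b a p) = (\<Sum>p\<in>UNIV. Ga p e d * Ricf Ga dGa b p)"
    unfolding Ricf_def sum_distrib_left by (rule sum.swap)
  ultimately show ?thesis unfolding nT_def dRicf_def by (simp add: sum.distrib)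
qed

lemma algD:
  fixes H :: "'n::finite \<Rightarrow> 'n \<Rightarrow> real"
  assumes dH: "\<And>e b d. dH e b d = - (\<Sum>p\<in>UNIV. H b p * Ga d e p + Ga b e p * H p d)"
  shows "(\<Sum>b\<in>UNIV. \<Sum>d\<in>UNIV. dH e b d * T b d + H b d * dT e b d)
       = (\<Sum>b\<in>UNIV. \<Sum>d\<in>UNIV. H b d * nT Ga T dT e b d)"
proof -
  have L: "(\<Sum>b\<in>UNIV. \<Sum>d\<in>UNIV. dH e b d * T b d + H b d * dT e b d)
     = (\<Sum>b\<in>UNIV. \<Sum>d\<in>UNIV. H b d * dT e b d)
       - (\<Sum>b\<in>UNIV. \<Sum>d\<in>UNIV. \<Sum>p\<in>UNIV. H b p * Ga d e p * T b d)
       - (\<Sum>b\<in>UNIV. \<Sum>d\<in>UNIV. \<Sum>p\<in>UNIV. Ga b e p * H p d * T b d)"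
    by (simp add: dH sum.distrib sum_subtractf sum_distrib_right sum_distrib_left algebra_simps)
  have R: "(\<Sum>b\<in>UNIV. \<Sum>d\<in>UNIV. H b d * nT Ga T dT e b d)
     = (\<Sum>b\<in>UNIV. \<Sum>d\<in>UNIV. H b d * dT e b d)
       - (\<Sum>b\<in>UNIV. \<Sum>d\<in>UNIV. \<Sum>p\<in>UNIV. H b d * Ga p e b * T p d)
       - (\<Sum>b\<in>UNIV. \<Sum>d\<in>UNIV. \<Sum>p\<in>UNIV. H b d * Ga p e d * T b p)"
    by (simp add: nT_def sum.distrib sum_subtractf sum_distrib_left sum_distrib_right algebra_simps)
  have 1: "(\<Sum>b\<in>UNIV. \<Sum>d\<in>UNIV. \<Sum>p\<in>UNIV. H b d * Ga p e d * T b p)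
         = (\<Sum>b\<in>UNIV. \<Sum>d\<in>UNIV. \<Sum>p\<in>UNIV. H b p * Ga d e p * T b d)"
    by (rule sum_swap_in)
  have 2: "(\<Sum>b\<in>UNIV. \<Sum>d\<in>UNIV. \<Sum>p\<in>UNIV. H b d * Ga p e b * T p d)
         = (\<Sum>b\<in>UNIV. \<Sum>d\<in>UNIV. \<Sum>p\<in>UNIV. Ga b e p * H p d * T b d)"
    by (subst sum_swap3) (simp add: mult_ac)
  show ?thesis using L R 1 2 by simp
qed


lemma sum_rot3: "(\<Sum>x\<in>UNIV. \<Sum>y\<in>UNIV. \<Sum>z\<in>UNIV. F x y z) = (\<Sum>z\<in>UNIV. \<Sum>x\<in>UNIV. \<Sum>y\<in>UNIV. (F x y z :: real))"
proof -
  have "(\<Sum>x\<in>UNIV. \<Sum>y\<in>UNIV. \<Sum>z\<in>UNIV. F x y z) = (\<Sum>x\<in>UNIV. \<Sum>z\<in>UNIV. \<Sum>y\<in>UNIV. F x y z)"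
    by (rule sum_swap_in)
  also have "\<dots> = (\<Sum>z\<in>UNIV. \<Sum>x\<in>UNIV. \<Sum>y\<in>UNIV. F x y z)" by (rule sum.swap)
  finally show ?thesis .
qed

lemma algF:
  fixes H :: "'n::finite \<Rightarrow> 'n \<Rightarrow> real" and dH :: "'n chr" and Ga :: "'n chr" and dGa :: "'n dchr" and ddGa :: "'n ddchr"
  defines "R \<equiv> Rmf Ga dGa" and "dR \<equiv> dRmf Ga dGa ddGa" and "Ric \<equiv> Ricf Ga dGa" and "dRic \<equiv> dRicf Ga dGa ddGa"
  assumes K: "\<And>a' e. (\<Sum>b\<in>UNIV. \<Sum>d\<in>UNIV. H b d * R a' b d e) + (\<Sum>h\<in>UNIV. H a' h * Ric h e) = 0"
    and dK: "(\<Sum>b\<in>UNIV. \<Sum>d\<in>UNIV. dH a b d * R a' b d e + H b d * dR a a' b d e)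
           + (\<Sum>h\<in>UNIV. dH a a' h * Ric h e + H a' h * dRic a h e) = 0"
    and dH: "\<And>e b d. dH e b d = - (\<Sum>p\<in>UNIV. H b p * Ga d e p + Ga b e p * H p d)"
  shows "(\<Sum>b\<in>UNIV. \<Sum>d\<in>UNIV. H b d * DRmf Ga dGa ddGa a a' b d e) = - (\<Sum>h\<in>UNIV. H a' h * nT Ga Ric dRic a h e)"
proof -
  define Z1 where "Z1 = (\<Sum>b\<in>UNIV. \<Sum>d\<in>UNIV. \<Sum>p\<in>UNIV. H b d * Ga a' a p * R p b d e)"
  define Z2 where "Z2 = (\<Sum>b\<in>UNIV. \<Sum>d\<in>UNIV. \<Sum>p\<in>UNIV. H b d * Ga p a b * R a' p d e)"
  define Z3 where "Z3 = (\<Sum>b\<in>UNIV. \<Sum>d\<in>UNIV. \<Sum>p\<in>UNIV. H b d * Ga p a d * R a' b p e)"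
  define Z4 where "Z4 = (\<Sum>b\<in>UNIV. \<Sum>d\<in>UNIV. \<Sum>p\<in>UNIV. H b d * Ga p a e * R a' b d p)"
  define Y1 where "Y1 = (\<Sum>b\<in>UNIV. \<Sum>d\<in>UNIV. \<Sum>p\<in>UNIV. H b p * Ga d a p * R a' b d e)"
  define Y2 where "Y2 = (\<Sum>b\<in>UNIV. \<Sum>d\<in>UNIV. \<Sum>p\<in>UNIV. Ga b a p * H p d * R a' b d e)"
  define Y3 where "Y3 = (\<Sum>h\<in>UNIV. \<Sum>p\<in>UNIV. H a' p * Ga h a p * Ric h e)"
  define Y4 where "Y4 = (\<Sum>h\<in>UNIV. \<Sum>p\<in>UNIV. Ga a' a p * H p h * Ric h e)"
  define W1 where "W1 = (\<Sum>h\<in>UNIV. \<Sum>p\<in>UNIV. H a' h * Ga p a h * Ric p e)"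
  define W2 where "W2 = (\<Sum>h\<in>UNIV. \<Sum>p\<in>UNIV. H a' h * Ga p a e * Ric h p)"
  define A where "A = (\<Sum>b\<in>UNIV. \<Sum>d\<in>UNIV. H b d * dR a a' b d e)"
  define B where "B = (\<Sum>h\<in>UNIV. H a' h * dRic a h e)"
  have LHS: "(\<Sum>b\<in>UNIV. \<Sum>d\<in>UNIV. H b d * DRmf Ga dGa ddGa a a' b d e) = A + Z1 - Z2 - Z3 - Z4"
    unfolding A_def Z1_def Z2_def Z3_def Z4_def DRmf_def R_def dR_def
    by (simp add: sum_distrib_left sum.distrib sum_subtractf algebra_simps)
  have RHS: "- (\<Sum>h\<in>UNIV. H a' h * nT Ga Ric dRic a h e) = - B + W1 + W2"
    unfolding B_def W1_def W2_def nT_def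
    by (simp add: sum_distrib_left sum.distrib sum_subtractf algebra_simps)
  have DK: "A + B = Y1 + Y2 + Y3 + Y4"
  proof -
    have "(\<Sum>b\<in>UNIV. \<Sum>d\<in>UNIV. dH a b d * R a' b d e + H b d * dR a a' b d e)
           + (\<Sum>h\<in>UNIV. dH a a' h * Ric h e + H a' h * dRic a h e) = A + B - Y1 - Y2 - Y3 - Y4"
      unfolding A_def B_def Y1_def Y2_def Y3_def Y4_def dH
      by (simp add: sum_distrib_left sum_distrib_right sum.distrib sum_subtractf algebra_simps)
    then show ?thesis using dK by simp
  qed
  have e13: "Z3 = Y1" unfolding Z3_def Y1_def by (rule sum_swap_in)
  have e22: "Z2 = Y2" unfolding Z2_def Y2_def by (subst sum_swap3) (simp add: mult_ac)
  have e3: "W1 = Y3" unfolding W1_def Y3_def by (subst sum.swap) (simp add: mult_ac)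
  have e41: "Y4 + Z1 = 0"
  proof -
    have "Y4 = (\<Sum>p\<in>UNIV. Ga a' a p * (\<Sum>h\<in>UNIV. H p h * Ric h e))"
      unfolding Y4_def sum_distrib_left by (subst sum.swap) (simp add: mult_ac)
    moreover have "Z1 = (\<Sum>p\<in>UNIV. Ga a' a p * (\<Sum>b\<in>UNIV. \<Sum>d\<in>UNIV. H b d * R p b d e))"
      unfolding Z1_def sum_distrib_left by (subst sum_rot3) (simp add: mult_ac)
    ultimately have "Y4 + Z1 = (\<Sum>p\<in>UNIV. Ga a' a p * ((\<Sum>b\<in>UNIV. \<Sum>d\<in>UNIV. H b d * R p b d e) + (\<Sum>h\<in>UNIV. H p h * Ric h e)))"
      by (simp add: sum.distrib algebra_simps)
    then show ?thesis using K by simp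
  qed
  have e42: "Z4 + W2 = 0"
  proof -
    have "W2 = (\<Sum>p\<in>UNIV. Ga p a e * (\<Sum>h\<in>UNIV. H a' h * Ric h p))"
      unfolding W2_def sum_distrib_left by (subst sum.swap) (simp add: mult_ac)
    moreover have "Z4 = (\<Sum>p\<in>UNIV. Ga p a e * (\<Sum>b\<in>UNIV. \<Sum>d\<in>UNIV. H b d * R a' b d p))"
      unfolding Z4_def sum_distrib_left by (subst sum_rot3) (simp add: mult_ac)
    ultimately have "Z4 + W2 = (\<Sum>p\<in>UNIV. Ga p a e * ((\<Sum>b\<in>UNIV. \<Sum>d\<in>UNIV. H b d * R a' b d p) + (\<Sum>h\<in>UNIV. H a' h * Ric h p)))"
      by (simp add: sum.distrib algebra_simps)
    then show ?thesis using K by simp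
  qed
  show ?thesis unfolding LHS RHS using DK e13 e22 e3 e41 e42 by linarith
qed


lemma contracted_bianchi:
  fixes H :: "'n::finite \<Rightarrow> 'n \<Rightarrow> real" and dH :: "'n chr" and Ga :: "'n chr" and dGa :: "'n dchr" and ddGa :: "'n ddchr"
  defines "R \<equiv> Rmf Ga dGa" and "dR \<equiv> dRmf Ga dGa ddGa" and "Ric \<equiv> Ricf Ga dGa" and "dRic \<equiv> dRicf Ga dGa ddGa"
  assumes Gsym: "\<And>a c b. Ga a c b = Ga a b c"
    and ddsym: "\<And>e f a c b. ddGa e f a c b = ddGa f e a c b"
    and Hsym: "\<And>a b. H a b = H b a"
    and K: "\<And>a' e. (\<Sum>b\<in>UNIV. \<Sum>d\<in>UNIV. H b d * R a' b d e) + (\<Sum>h\<in>UNIV. H a' h * Ric h e) = 0"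
    and dK: "\<And>a a' e. (\<Sum>b\<in>UNIV. \<Sum>d\<in>UNIV. dH a b d * R a' b d e + H b d * dR a a' b d e)
           + (\<Sum>h\<in>UNIV. dH a a' h * Ric h e + H a' h * dRic a h e) = 0"
    and dH: "\<And>e b d. dH e b d = - (\<Sum>p\<in>UNIV. H b p * Ga d e p + Ga b e p * H p d)"
  shows "(\<Sum>b\<in>UNIV. \<Sum>d\<in>UNIV. H b d * nT Ga Ric dRic d b e)
       = (1/2) * (\<Sum>b\<in>UNIV. \<Sum>d\<in>UNIV. dH e b d * Ric b d + H b d * dRic e b d)"
proof -
  have star: "nT Ga Ric dRic e b d + (\<Sum>a\<in>UNIV. DRmf Ga dGa ddGa a a b d e) - nT Ga Ric dRic d b e = 0" for b d
  proof -
    have "\<And>a. DRmf Ga dGa ddGa e a b a d + DRmf Ga dGa ddGa a a b d e + DRmf Ga dGa ddGa d a b e a = 0"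
      by (rule bianchi2[OF Gsym ddsym])
    then have "(\<Sum>a\<in>UNIV. DRmf Ga dGa ddGa e a b a d) + (\<Sum>a\<in>UNIV. DRmf Ga dGa ddGa a a b d e)
       + (\<Sum>a\<in>UNIV. DRmf Ga dGa ddGa d a b e a) = 0"
      by (simp add: sum.distrib[symmetric])
    moreover have "(\<Sum>a\<in>UNIV. DRmf Ga dGa ddGa d a b e a) = - (\<Sum>a\<in>UNIV. DRmf Ga dGa ddGa d a b a e)"
      by (simp add: sum_negf[symmetric] DRmf_antisym[of Ga dGa ddGa d _ b e])
    ultimately show ?thesis using algA[of Ga dGa ddGa e b d] algA[of Ga dGa ddGa d b e]
      unfolding Ric_def dRic_def by simp
  qed
  define S1 where "S1 = (\<Sum>b\<in>UNIV. \<Sum>d\<in>UNIV. H b d * nT Ga Ric dRic e b d)"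
  define S2 where "S2 = (\<Sum>b\<in>UNIV. \<Sum>d\<in>UNIV. H b d * (\<Sum>a\<in>UNIV. DRmf Ga dGa ddGa a a b d e))"
  define S3 where "S3 = (\<Sum>b\<in>UNIV. \<Sum>d\<in>UNIV. H b d * nT Ga Ric dRic d b e)"
  have "S1 + S2 - S3 = (\<Sum>b\<in>UNIV. \<Sum>d\<in>UNIV. H b d * (nT Ga Ric dRic e b d + (\<Sum>a\<in>UNIV. DRmf Ga dGa ddGa a a b d e) - nT Ga Ric dRic d b e))"
    unfolding S1_def S2_def S3_def by (simp add: sum.distrib sum_subtractf algebra_simps)
  also have "\<dots> = 0" using star by simp
  finally have 0: "S1 + S2 - S3 = 0" .
  have S1: "S1 = (\<Sum>b\<in>UNIV. \<Sum>d\<in>UNIV. dH e b d * Ric b d + H b d * dRic e b d)"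
    unfolding S1_def using algD[where dH=dH and H=H and Ga=Ga and T=Ric and dT=dRic and e=e, OF dH] by simp
  have "S2 = (\<Sum>a\<in>UNIV. \<Sum>b\<in>UNIV. \<Sum>d\<in>UNIV. H b d * DRmf Ga dGa ddGa a a b d e)"
    unfolding S2_def sum_distrib_left by (subst sum_rot3) simp
  also have "\<dots> = (\<Sum>a\<in>UNIV. - (\<Sum>h\<in>UNIV. H a h * nT Ga Ric dRic a h e))"
    using algF[OF K[unfolded R_def Ric_def] dK[unfolded R_def Ric_def dR_def dRic_def] dH]
    unfolding Ric_def dRic_def by simp
  also have "\<dots> = - S3"
  proof -
    have "(\<Sum>a\<in>UNIV. \<Sum>h\<in>UNIV. H a h * nT Ga Ric dRic a h e) = (\<Sum>h\<in>UNIV. \<Sum>a\<in>UNIV. H h a * nT Ga Ric dRic a h e)"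
      by (subst sum.swap) (simp add: Hsym)
    then show ?thesis unfolding S3_def by (simp add: sum_negf)
  qed
  finally have "S2 = - S3" .
  then show ?thesis using 0 S1 unfolding S3_def by simp
qed


definition kd :: "'n \<Rightarrow> 'n \<Rightarrow> real" where "kd a b = (if a = b then 1 else 0)"

lemma algL1:
  fixes G H :: "'n::finite \<Rightarrow> 'n \<Rightarrow> real" and dG Ga :: "'n chr"
  assumes Gsym: "\<And>a b. G a b = G b a" and Hsym: "\<And>a b. H a b = H b a"
    and HG: "\<And>a c. (\<Sum>b\<in>UNIV. H a b * G b c) = (if a = c then 1 else 0)"
    and dGsym: "\<And>c a b. dG c a b = dG c b a"
    and Gadef: "\<And>k i j. Ga k i j = 1/2 * (\<Sum>l\<in>UNIV. H k l * (dG i j l + dG j i l - dG l i j))"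
  shows "dG c a b = (\<Sum>p\<in>UNIV. Ga p c a * G p b + Ga p c b * G a p)"
proof -
  have low: "(\<Sum>p\<in>UNIV. Ga p c a * G p b) = 1/2 * (dG c a b + dG a c b - dG b c a)" for c a b
  proof -
    have "(\<Sum>p\<in>UNIV. Ga p c a * G p b) = 1/2 * (\<Sum>p\<in>UNIV. \<Sum>l\<in>UNIV. H p l * (dG c a l + dG a c l - dG l c a) * G p b)"
      by (simp add: Gadef sum_distrib_left sum_distrib_right mult.assoc)
    also have "\<dots> = 1/2 * (\<Sum>l\<in>UNIV. (dG c a l + dG a c l - dG l c a) * (\<Sum>p\<in>UNIV. H l p * G p b))"
      by (subst sum.swap) (simp add: sum_distrib_left sum_distrib_right sum_divide_distrib Hsym mult_ac)
    also have "\<dots> = 1/2 * (dG c a b + dG a c b - dG b c a)"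
      by (simp add: HG)
    finally show ?thesis .
  qed
  have "(\<Sum>p\<in>UNIV. Ga p c a * G p b + Ga p c b * G a p) = (\<Sum>p\<in>UNIV. Ga p c a * G p b) + (\<Sum>p\<in>UNIV. Ga p c b * G p a)"
    by (simp add: sum.distrib Gsym[of a])
  also have "\<dots> = dG c a b" using low[of c a b] low[of c b a] dGsym[of c a b] by simp
  finally show ?thesis by simp
qed

lemma algL2:
  fixes G H :: "'n::finite \<Rightarrow> 'n \<Rightarrow> real" and dG Ga dH :: "'n chr"
  assumes GH: "\<And>a c. (\<Sum>b\<in>UNIV. G a b * H b c) = (if a = c then 1 else 0)"
    and HG: "\<And>a c. (\<Sum>b\<in>UNIV. H a b * G b c) = (if a = c then 1 else 0)"
    and dHG: "\<And>c a b. (\<Sum>l\<in>UNIV. dH c a l * G l b + H a l * dG c l b) = 0"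
    and compat: "\<And>c a b. dG c a b = (\<Sum>p\<in>UNIV. Ga p c a * G p b + Ga p c b * G a p)"
  shows "dH c a m = - (\<Sum>p\<in>UNIV. H a p * Ga m c p + Ga a c p * H p m)"
proof -
  have "dH c a m = (\<Sum>b\<in>UNIV. (\<Sum>l\<in>UNIV. dH c a l * G l b) * H b m)"
  proof -
    have "(\<Sum>b\<in>UNIV. (\<Sum>l\<in>UNIV. dH c a l * G l b) * H b m) = (\<Sum>l\<in>UNIV. dH c a l * (\<Sum>b\<in>UNIV. G l b * H b m))"
      by (simp add: sum_distrib_left sum_distrib_right mult.assoc) (rule sum.swap)
    then show ?thesis by (simp add: GH)
  qed
  also have "\<dots> = - (\<Sum>b\<in>UNIV. (\<Sum>l\<in>UNIV. H a l * dG c l b) * H b m)"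
  proof -
    have "\<And>b. (\<Sum>l\<in>UNIV. dH c a l * G l b) = - (\<Sum>l\<in>UNIV. H a l * dG c l b)"
      using dHG by (simp add: sum.distrib eq_neg_iff_add_eq_0)
    then show ?thesis by (simp add: sum_negf)
  qed
  also have "(\<Sum>b\<in>UNIV. (\<Sum>l\<in>UNIV. H a l * dG c l b) * H b m)
      = (\<Sum>b\<in>UNIV. \<Sum>l\<in>UNIV. \<Sum>p\<in>UNIV. H a l * Ga p c l * G p b * H b m)
      + (\<Sum>b\<in>UNIV. \<Sum>l\<in>UNIV. \<Sum>p\<in>UNIV. H a l * G l p * Ga p c b * H b m)"
    by (simp add: compat sum.distrib sum_distrib_left sum_distrib_right algebra_simps)
  also have "(\<Sum>b\<in>UNIV. \<Sum>l\<in>UNIV. \<Sum>p\<in>UNIV. H a l * Ga p c l * G p b * H b m) = (\<Sum>p\<in>UNIV. H a p * Ga m c p)"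
  proof -
    have "(\<Sum>b\<in>UNIV. \<Sum>l\<in>UNIV. \<Sum>p\<in>UNIV. H a l * Ga p c l * G p b * H b m)
        = (\<Sum>l\<in>UNIV. \<Sum>p\<in>UNIV. H a l * Ga p c l * (\<Sum>b\<in>UNIV. G p b * H b m))"
      by (subst sum_rot3[symmetric]) (simp add: sum_distrib_left mult_ac)
    then show ?thesis by (simp add: GH)
  qed
  also have "(\<Sum>b\<in>UNIV. \<Sum>l\<in>UNIV. \<Sum>p\<in>UNIV. H a l * G l p * Ga p c b * H b m) = (\<Sum>p\<in>UNIV. Ga a c p * H p m)"
  proof -
    have "(\<Sum>b\<in>UNIV. \<Sum>l\<in>UNIV. \<Sum>p\<in>UNIV. H a l * G l p * Ga p c b * H b m)
        = (\<Sum>b\<in>UNIV. \<Sum>p\<in>UNIV. (\<Sum>l\<in>UNIV. H a l * G l p) * Ga p c b * H b m)"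
      by (subst sum_swap_in) (simp add: sum_distrib_right sum_distrib_left mult_ac)
    then show ?thesis by (simp add: HG mult.assoc)
  qed
  finally show ?thesis by (simp add: sum.distrib)
qed


lemma algL4:
  fixes G :: "'n::finite \<Rightarrow> 'n \<Rightarrow> real" and dG Ga :: "'n chr" and ddG dGa :: "'n dchr"
  assumes Gsym: "\<And>a b. G a b = G b a"
    and compat: "\<And>c a b. dG c a b = (\<Sum>p\<in>UNIV. Ga p c a * G p b + Ga p c b * G a p)"
    and dcompat: "\<And>d c a b. ddG d c a b = (\<Sum>p\<in>UNIV. dGa d p c a * G p b + Ga p c a * dG d p b
                                    + dGa d p c b * G a p + Ga p c b * dG d a p)"
    and ddGsym: "\<And>d c a b. ddG d c a b = ddG c d a b"
  shows "(\<Sum>p\<in>UNIV. G h p * Rmf Ga dGa p b c d) + (\<Sum>p\<in>UNIV. G b p * Rmf Ga dGa p h c d) = 0"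
proof -
  define E1 where "E1 = (\<Sum>p\<in>UNIV. dGa c p d h * G p b) - (\<Sum>p\<in>UNIV. dGa d p c h * G p b)"
  define E2 where "E2 = (\<Sum>p\<in>UNIV. dGa c p d b * G h p) - (\<Sum>p\<in>UNIV. dGa d p c b * G h p)"
  define CH1 where "CH1 = (\<Sum>p\<in>UNIV. \<Sum>q\<in>UNIV. G h p * Ga p c q * Ga q d b)"
  define CH2 where "CH2 = (\<Sum>p\<in>UNIV. \<Sum>q\<in>UNIV. G h p * Ga p d q * Ga q c b)"
  define CB1 where "CB1 = (\<Sum>p\<in>UNIV. \<Sum>q\<in>UNIV. G b p * Ga p c q * Ga q d h)"
  define CB2 where "CB2 = (\<Sum>p\<in>UNIV. \<Sum>q\<in>UNIV. G b p * Ga p d q * Ga q c h)"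
  define P1 where "P1 = (\<Sum>p\<in>UNIV. \<Sum>q\<in>UNIV. Ga p d h * Ga q c p * G q b)"
  define P2 where "P2 = (\<Sum>p\<in>UNIV. \<Sum>q\<in>UNIV. Ga p d h * Ga q c b * G p q)"
  define P3 where "P3 = (\<Sum>p\<in>UNIV. \<Sum>q\<in>UNIV. Ga p c h * Ga q d p * G q b)"
  define P4 where "P4 = (\<Sum>p\<in>UNIV. \<Sum>q\<in>UNIV. Ga p c h * Ga q d b * G p q)"
  define P5 where "P5 = (\<Sum>p\<in>UNIV. \<Sum>q\<in>UNIV. Ga p d b * Ga q c h * G q p)"
  define P6 where "P6 = (\<Sum>p\<in>UNIV. \<Sum>q\<in>UNIV. Ga p d b * Ga q c p * G h q)"
  define P7 where "P7 = (\<Sum>p\<in>UNIV. \<Sum>q\<in>UNIV. Ga p c b * Ga q d h * G q p)"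
  define P8 where "P8 = (\<Sum>p\<in>UNIV. \<Sum>q\<in>UNIV. Ga p c b * Ga q d p * G h q)"
  have R1: "(\<Sum>p\<in>UNIV. G h p * Rmf Ga dGa p b c d) = E2 + CH1 - CH2"
    unfolding E2_def CH1_def CH2_def Rmf_def
    by (simp add: sum_distrib_left sum.distrib sum_subtractf algebra_simps)
  have R2: "(\<Sum>p\<in>UNIV. G b p * Rmf Ga dGa p h c d) = E1 + CB1 - CB2"
    unfolding E1_def CB1_def CB2_def Rmf_def
    by (simp add: sum_distrib_left sum.distrib sum_subtractf algebra_simps Gsym[of b])
  have Q: "ddG c d h b - ddG d c h b = E1 + E2 + (P1 + P2 - P3 - P4 + P5 + P6 - P7 - P8)"
    unfolding E1_def E2_def P1_def P2_def P3_def P4_def P5_def P6_def P7_def P8_def dcompat compat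
    by (simp add: sum_distrib_left sum_distrib_right sum.distrib sum_subtractf algebra_simps)
  have "ddG c d h b - ddG d c h b = 0" using ddGsym by simp
  moreover have "P2 = P7" unfolding P2_def P7_def by (subst sum.swap) (simp add: Gsym mult_ac)
  moreover have "P4 = P5" unfolding P4_def P5_def by (subst sum.swap) (simp add: Gsym mult_ac)
  moreover have "CH1 = P6" unfolding CH1_def P6_def by (subst sum.swap) (simp add: mult_ac)
  moreover have "CH2 = P8" unfolding CH2_def P8_def by (subst sum.swap) (simp add: mult_ac)
  moreover have "CB1 = P1" unfolding CB1_def P1_def by (subst sum.swap) (simp add: Gsym mult_ac)
  moreover have "CB2 = P3" unfolding CB2_def P3_def by (subst sum.swap) (simp add: Gsym mult_ac)
  ultimately show ?thesis unfolding R1 R2 using Q by linarith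
qed


lemma algL5:
  fixes G H :: "'n::finite \<Rightarrow> 'n \<Rightarrow> real" and Ga :: "'n chr" and dGa :: "'n dchr"
  assumes HG: "\<And>a c. (\<Sum>b\<in>UNIV. H a b * G b c) = (if a = c then 1 else 0)"
    and Hsym: "\<And>a b. H a b = H b a"
    and L4: "\<And>h b c d. (\<Sum>p\<in>UNIV. G h p * Rmf Ga dGa p b c d) + (\<Sum>p\<in>UNIV. G b p * Rmf Ga dGa p h c d) = 0"
  shows "(\<Sum>b\<in>UNIV. \<Sum>d\<in>UNIV. H b d * Rmf Ga dGa a' b d e) + (\<Sum>h\<in>UNIV. H a' h * Ricf Ga dGa h e) = 0"
proof -
  let ?R = "Rmf Ga dGa"
  define Rl where "Rl q b d e = (\<Sum>h\<in>UNIV. G q h * ?R h b d e)" for q b d e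
  have raise: "(\<Sum>q\<in>UNIV. H x q * Rl q b d e) = ?R x b d e" for x b d e
  proof -
    have "(\<Sum>q\<in>UNIV. H x q * Rl q b d e) = (\<Sum>h\<in>UNIV. (\<Sum>q\<in>UNIV. H x q * G q h) * ?R h b d e)"
      unfolding Rl_def by (simp add: sum_distrib_left sum_distrib_right mult.assoc) (rule sum.swap)
    then show ?thesis by (simp add: HG)
  qed
  have anti: "Rl q b d e = - Rl b q d e" for q b d e
    using L4[of q b d e] unfolding Rl_def by (simp add: eq_neg_iff_add_eq_0)
  have "(\<Sum>b\<in>UNIV. \<Sum>d\<in>UNIV. H b d * ?R a' b d e)
      = (\<Sum>b\<in>UNIV. \<Sum>d\<in>UNIV. H b d * (\<Sum>q\<in>UNIV. H a' q * Rl q b d e))"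
    by (simp only: raise)
  also have "\<dots> = (\<Sum>b\<in>UNIV. \<Sum>d\<in>UNIV. \<Sum>q\<in>UNIV. - (H d b * H a' q * Rl b q d e))"
  proof (intro sum.cong refl)
    fix b d
    have "(\<Sum>q\<in>UNIV. H a' q * Rl q b d e) = (\<Sum>q\<in>UNIV. H a' q * (- Rl b q d e))"
      by (intro sum.cong refl) (subst anti, rule refl)
    then show "H b d * (\<Sum>q\<in>UNIV. H a' q * Rl q b d e) = (\<Sum>q\<in>UNIV. - (H d b * H a' q * Rl b q d e))"
      by (simp add: sum_distrib_left Hsym[of b d] mult_ac)
  qed
  also have "\<dots> = - (\<Sum>q\<in>UNIV. H a' q * (\<Sum>d\<in>UNIV. (\<Sum>b\<in>UNIV. H d b * Rl b q d e)))"
    by (subst sum_swap3) (simp add: sum_distrib_left sum_negf mult_ac)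
  also have "\<dots> = - (\<Sum>q\<in>UNIV. H a' q * Ricf Ga dGa q e)"
    by (simp only: raise Ricf_def)
  finally show ?thesis by simp
qed

lemma ric_sym:
  fixes G H :: "'n::finite \<Rightarrow> 'n \<Rightarrow> real" and Ga :: "'n chr" and dGa :: "'n dchr"
  assumes HG: "\<And>a c. (\<Sum>b\<in>UNIV. H a b * G b c) = (if a = c then 1 else 0)"
    and Hsym: "\<And>a b. H a b = H b a"
    and L4: "\<And>h b c d. (\<Sum>p\<in>UNIV. G h p * Rmf Ga dGa p b c d) + (\<Sum>p\<in>UNIV. G b p * Rmf Ga dGa p h c d) = 0"
    and Gsym: "\<And>a c b. Ga a c b = Ga a b c"
    and dGsym: "\<And>e a c b. dGa e a c b = dGa e a b c"
  shows "Ricf Ga dGa b d = Ricf Ga dGa d b"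
proof -
  let ?R = "Rmf Ga dGa"
  define Rl where "Rl q b d e = (\<Sum>h\<in>UNIV. G q h * ?R h b d e)" for q b d e
  have raise: "(\<Sum>q\<in>UNIV. H x q * Rl q b d e) = ?R x b d e" for x b d e
  proof -
    have "(\<Sum>q\<in>UNIV. H x q * Rl q b d e) = (\<Sum>h\<in>UNIV. (\<Sum>q\<in>UNIV. H x q * G q h) * ?R h b d e)"
      unfolding Rl_def by (simp add: sum_distrib_left sum_distrib_right mult.assoc) (rule sum.swap)
    then show ?thesis by (simp add: HG)
  qed
  have anti: "Rl q b d e = - Rl b q d e" for q b d e
    using L4[of q b d e] unfolding Rl_def by (simp add: eq_neg_iff_add_eq_0)
  define X where "X = (\<Sum>a\<in>UNIV. \<Sum>q\<in>UNIV. H a q * Rl q a b d)"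
  have "X = (\<Sum>a\<in>UNIV. \<Sum>q\<in>UNIV. - (H a q * Rl a q b d))"
    unfolding X_def by (intro sum.cong refl) (subst anti, simp)
  also have "\<dots> = - (\<Sum>q\<in>UNIV. \<Sum>a\<in>UNIV. H q a * Rl q a b d)"
    by (simp add: sum_negf)
  also have "(\<Sum>q\<in>UNIV. \<Sum>a\<in>UNIV. H q a * Rl q a b d) = X"
  proof -
    have "(\<Sum>q\<in>UNIV. \<Sum>a\<in>UNIV. H q a * Rl q a b d) = (\<Sum>a\<in>UNIV. \<Sum>q\<in>UNIV. H q a * Rl q a b d)"
      by (rule sum.swap)
    also have "\<dots> = X" unfolding X_def by (intro sum.cong refl) (subst Hsym, rule refl)
    finally show ?thesis .
  qed
  finally have "X = 0" by simp
  then have tr: "(\<Sum>a\<in>UNIV. ?R a a b d) = 0" unfolding X_def by (simp only: raise)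
  have "Ricf Ga dGa b d - Ricf Ga dGa d b = (\<Sum>a\<in>UNIV. ?R a a b d)"
  proof -
    have "?R a b a d - ?R a d a b - ?R a a b d = 0" for a
    proof -
      have d1: "dGa a a b d = dGa a a d b" "dGa b a d a = dGa b a a d" "dGa d a b a = dGa d a a b"
        using dGsym by auto
      have g1: "\<And>p. Ga p d b = Ga p b d" "\<And>p. Ga p a b = Ga p b a" "\<And>p. Ga p a d = Ga p d a"
        using Gsym by auto
      show ?thesis unfolding Rmf_def by (simp only: d1 g1) (simp add: sum_subtractf)
    qed
    then have "(\<Sum>a\<in>UNIV. ?R a b a d - ?R a d a b - ?R a a b d) = 0" by simp
    then show ?thesis unfolding Ricf_def by (simp add: sum_subtractf)
  qed
  then show ?thesis using tr by simp
qed


definition hessf :: "'n::finite chr \<Rightarrow> ('n \<Rightarrow> real) \<Rightarrow> ('n \<Rightarrow> 'n \<Rightarrow> real) \<Rightarrow> 'n \<Rightarrow> 'n \<Rightarrow> real" where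
  "hessf Ga f1 f2 i j = f2 i j - (\<Sum>p\<in>UNIV. Ga p i j * f1 p)"

definition dhessf :: "'n::finite chr \<Rightarrow> 'n dchr \<Rightarrow> ('n \<Rightarrow> real) \<Rightarrow> ('n \<Rightarrow> 'n \<Rightarrow> real) \<Rightarrow> 'n chr \<Rightarrow> 'n \<Rightarrow> 'n \<Rightarrow> 'n \<Rightarrow> real" where
  "dhessf Ga dGa f1 f2 f3 k i j = f3 k i j - (\<Sum>p\<in>UNIV. dGa k p i j * f1 p + Ga p i j * f2 k p)"

lemma ricci_identity:
  fixes Ga :: "'n::finite chr"
  assumes Gsym: "\<And>a c b. Ga a c b = Ga a b c"
    and f3sym: "\<And>k j i. f3 k j i = f3 j k i"
  shows "nT Ga (hessf Ga f1 f2) (dhessf Ga dGa f1 f2 f3) k j i - nT Ga (hessf Ga f1 f2) (dhessf Ga dGa f1 f2 f3) j k i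
       = - (\<Sum>q\<in>UNIV. f1 q * Rmf Ga dGa q i k j)"
proof -
  have g1: "\<And>p. Ga p j k = Ga p k j" using Gsym by auto
  have sw1: "(\<Sum>p\<in>UNIV. \<Sum>q\<in>UNIV. Ga p k i * Ga q j p * f1 q) = (\<Sum>q\<in>UNIV. \<Sum>p\<in>UNIV. f1 q * Ga q j p * Ga p k i)"
    by (subst sum.swap) (simp add: mult_ac)
  have sw2: "(\<Sum>p\<in>UNIV. \<Sum>q\<in>UNIV. Ga p j i * Ga q k p * f1 q) = (\<Sum>q\<in>UNIV. \<Sum>p\<in>UNIV. f1 q * Ga q k p * Ga p j i)"
    by (subst sum.swap) (simp add: mult_ac)
  show ?thesis
    unfolding nT_def hessf_def dhessf_def Rmf_def
    using sw1 sw2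
    by (simp add: f3sym[of k j i] g1 sum.distrib sum_subtractf sum_distrib_left sum_distrib_right algebra_simps)
qed


lemma nT_hess_sym:
  fixes Ga :: "'n::finite chr"
  assumes Gsym: "\<And>a c b. Ga a c b = Ga a b c"
    and dGsym: "\<And>e a c b. dGa e a c b = dGa e a b c"
    and f2sym: "\<And>i j. f2 i j = f2 j i"
    and f3sym: "\<And>k i j. f3 k i j = f3 k j i"
  shows "nT Ga (hessf Ga f1 f2) (dhessf Ga dGa f1 f2 f3) k i j = nT Ga (hessf Ga f1 f2) (dhessf Ga dGa f1 f2 f3) k j i"
proof -
  have hs: "hessf Ga f1 f2 a b = hessf Ga f1 f2 b a" for a b
    unfolding hessf_def by (simp add: f2sym[of a b] Gsym[of _ a b])
  have ds: "dhessf Ga dGa f1 f2 f3 k i j = dhessf Ga dGa f1 f2 f3 k j i"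
    unfolding dhessf_def by (simp add: f3sym[of k i j] Gsym[of _ i j] dGsym[of k _ i j])
  have "(\<Sum>p\<in>UNIV. Ga p k i * hessf Ga f1 f2 p j + Ga p k j * hessf Ga f1 f2 i p)
      = (\<Sum>p\<in>UNIV. Ga p k j * hessf Ga f1 f2 p i + Ga p k i * hessf Ga f1 f2 j p)"
    by (intro sum.cong refl) (simp add: hs[of _ j] hs[of i])
  then show ?thesis unfolding nT_def using ds by simp
qed

lemma div_hess:
  fixes Ga :: "'n::finite chr" and H :: "'n \<Rightarrow> 'n \<Rightarrow> real"
  assumes Gsym: "\<And>a c b. Ga a c b = Ga a b c"
    and dGsym: "\<And>e a c b. dGa e a c b = dGa e a b c"
    and f2sym: "\<And>i j. f2 i j = f2 j i"
    and f3sym: "\<And>k i j. f3 k i j = f3 k j i"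
    and f3sym2: "\<And>k j i. f3 k j i = f3 j k i"
    and K: "\<And>a' e. (\<Sum>b\<in>UNIV. \<Sum>d\<in>UNIV. H b d * Rmf Ga dGa a' b d e) + (\<Sum>h\<in>UNIV. H a' h * Ricf Ga dGa h e) = 0"
    and Hsym: "\<And>a b. H a b = H b a"
    and Rsym: "\<And>a b. Ricf Ga dGa a b = Ricf Ga dGa b a"
  shows "(\<Sum>i\<in>UNIV. \<Sum>k\<in>UNIV. H i k * nT Ga (hessf Ga f1 f2) (dhessf Ga dGa f1 f2 f3) k i j)
       - (\<Sum>i\<in>UNIV. \<Sum>k\<in>UNIV. H i k * nT Ga (hessf Ga f1 f2) (dhessf Ga dGa f1 f2 f3) j i k)
       = (\<Sum>h\<in>UNIV. Ricf Ga dGa j h * (\<Sum>q\<in>UNIV. H h q * f1 q))"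
proof -
  let ?N = "nT Ga (hessf Ga f1 f2) (dhessf Ga dGa f1 f2 f3)"
  have "(\<Sum>i\<in>UNIV. \<Sum>k\<in>UNIV. H i k * ?N k i j) - (\<Sum>i\<in>UNIV. \<Sum>k\<in>UNIV. H i k * ?N j i k)
      = (\<Sum>i\<in>UNIV. \<Sum>k\<in>UNIV. H i k * (?N k j i - ?N j k i))"
  proof -
    have e1: "(\<Sum>i\<in>UNIV. \<Sum>k\<in>UNIV. H i k * ?N k i j) = (\<Sum>i\<in>UNIV. \<Sum>k\<in>UNIV. H i k * ?N k j i)"
      by (intro sum.cong refl) (subst nT_hess_sym[OF Gsym dGsym f2sym f3sym], rule refl)
    have e2: "(\<Sum>i\<in>UNIV. \<Sum>k\<in>UNIV. H i k * ?N j i k) = (\<Sum>i\<in>UNIV. \<Sum>k\<in>UNIV. H i k * ?N j k i)"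
      by (intro sum.cong refl) (subst nT_hess_sym[OF Gsym dGsym f2sym f3sym], rule refl)
    show ?thesis unfolding e1 e2 by (simp add: sum_subtractf right_diff_distrib)
  qed
  also have "\<dots> = (\<Sum>i\<in>UNIV. \<Sum>k\<in>UNIV. H i k * (- (\<Sum>q\<in>UNIV. f1 q * Rmf Ga dGa q i k j)))"
    by (simp only: ricci_identity[OF Gsym f3sym2])
  also have "\<dots> = - (\<Sum>q\<in>UNIV. f1 q * (\<Sum>i\<in>UNIV. \<Sum>k\<in>UNIV. H i k * Rmf Ga dGa q i k j))"
    by (simp add: sum_distrib_left sum_negf) (subst sum_rot3, simp add: mult_ac)
  also have "\<dots> = (\<Sum>q\<in>UNIV. f1 q * (\<Sum>h\<in>UNIV. H q h * Ricf Ga dGa h j))"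
  proof -
    have "\<And>q. (\<Sum>i\<in>UNIV. \<Sum>k\<in>UNIV. H i k * Rmf Ga dGa q i k j) = - (\<Sum>h\<in>UNIV. H q h * Ricf Ga dGa h j)"
      using K by (simp add: eq_neg_iff_add_eq_0)
    then show ?thesis by (simp add: sum_negf)
  qed
  also have "\<dots> = (\<Sum>h\<in>UNIV. Ricf Ga dGa j h * (\<Sum>q\<in>UNIV. H h q * f1 q))"
  proof -
    have "(\<Sum>q\<in>UNIV. f1 q * (\<Sum>h\<in>UNIV. H q h * Ricf Ga dGa h j)) = (\<Sum>q\<in>UNIV. \<Sum>h\<in>UNIV. f1 q * H q h * Ricf Ga dGa h j)"
      by (simp add: sum_distrib_left mult.assoc)
    also have "\<dots> = (\<Sum>h\<in>UNIV. \<Sum>q\<in>UNIV. f1 q * H q h * Ricf Ga dGa h j)" by (rule sum.swap)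
    also have "\<dots> = (\<Sum>h\<in>UNIV. Ricf Ga dGa j h * (\<Sum>q\<in>UNIV. H h q * f1 q))"
    proof (intro sum.cong refl)
      fix h show "(\<Sum>q\<in>UNIV. f1 q * H q h * Ricf Ga dGa h j) = Ricf Ga dGa j h * (\<Sum>q\<in>UNIV. H h q * f1 q)"
        by (simp add: sum_distrib_left Hsym[of _ h] Rsym[of h j] mult_ac)
    qed
    finally show ?thesis .
  qed
  finally show ?thesis .
qed

lemma div_phig:
  fixes Ga dG :: "'n::finite chr" and H G :: "'n \<Rightarrow> 'n \<Rightarrow> real"
  assumes compat: "\<And>c a b. dG c a b = (\<Sum>p\<in>UNIV. Ga p c a * G p b + Ga p c b * G a p)"
    and HG: "\<And>a c. (\<Sum>b\<in>UNIV. H a b * G b c) = (if a = c then 1 else 0)"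
    and Hsym: "\<And>a b. H a b = H b a"
  shows "(\<Sum>i\<in>UNIV. \<Sum>k\<in>UNIV. H i k * nT Ga (\<lambda>i j. phi * G i j) (\<lambda>k i j. dphi k * G i j + phi * dG k i j) k i j) = dphi j"
proof -
  have "nT Ga (\<lambda>i j. phi * G i j) (\<lambda>k i j. dphi k * G i j + phi * dG k i j) k i j = dphi k * G i j" for k i
    unfolding nT_def compat[of k i j] by (simp add: sum_distrib_left sum.distrib algebra_simps)
  then have "(\<Sum>i\<in>UNIV. \<Sum>k\<in>UNIV. H i k * nT Ga (\<lambda>i j. phi * G i j) (\<lambda>k i j. dphi k * G i j + phi * dG k i j) k i j)
     = (\<Sum>i\<in>UNIV. \<Sum>k\<in>UNIV. H i k * (dphi k * G i j))" by simp
  also have "\<dots> = (\<Sum>k\<in>UNIV. \<Sum>i\<in>UNIV. H i k * (dphi k * G i j))" by (rule sum.swap)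
  also have "\<dots> = (\<Sum>k\<in>UNIV. dphi k * (\<Sum>i\<in>UNIV. H k i * G i j))"
  proof (intro sum.cong refl)
    fix k show "(\<Sum>i\<in>UNIV. H i k * (dphi k * G i j)) = dphi k * (\<Sum>i\<in>UNIV. H k i * G i j)"
      by (simp add: sum_distrib_left Hsym[of _ k] mult_ac)
  qed
  finally show ?thesis by (simp add: HG)
qed


context rmet
begin

lemma sdiff[simp]: "smooth_on U h \<Longrightarrow> y \<in> U \<Longrightarrow> h differentiable (at y)"
  by (rule smooth_diff)

lemma smooth_simps[simp]:
  "smooth_on U (\<lambda>y. c)"
  "smooth_on U a \<Longrightarrow> smooth_on U b \<Longrightarrow> smooth_on U (\<lambda>y. a y + b y)"
  "smooth_on U a \<Longrightarrow> smooth_on U b \<Longrightarrow> smooth_on U (\<lambda>y. a y - b y)"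
  "smooth_on U a \<Longrightarrow> smooth_on U b \<Longrightarrow> smooth_on U (\<lambda>y. a y * b y)"
  "(\<And>j. smooth_on U (F j)) \<Longrightarrow> smooth_on U (\<lambda>y. \<Sum>j\<in>(UNIV::'b::finite set). F j y)"
  "smooth_on U h \<Longrightarrow> smooth_on U (pd i h)"
  "smooth_on U a \<Longrightarrow> smooth_on U (\<lambda>y. a y / c)"
  using U_open by (auto intro: smooth_const smooth_add smooth_minus smooth_mult smooth_sum smooth_pd
      simp: divide_inverse)

lemma G_smooth'[simp]: "smooth_on U (\<lambda>y. g y $ a $ b)" by (rule G_smooth)
lemma H_smooth'[simp]: "smooth_on U (\<lambda>y. ginv g y $ a $ b)" by (rule H_smooth)

lemma Ga_smooth[simp]: "smooth_on U (christoffel g k i j)"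
proof -
  have "christoffel g k i j = (\<lambda>x. (1/2) * (\<Sum>l\<in>UNIV. ginv g x $ k $ l *
      (pd i (\<lambda>y. g y $ j $ l) x + pd j (\<lambda>y. g y $ i $ l) x - pd l (\<lambda>y. g y $ i $ j) x)))"
    by (simp add: fun_eq_iff christoffel_def)
  moreover have "smooth_on U \<dots>" by simp
  ultimately show ?thesis by simp
qed

lemma pd_simps:
  "y \<in> U \<Longrightarrow> smooth_on U a \<Longrightarrow> smooth_on U b \<Longrightarrow> pd i (\<lambda>z. a z + b z) y = pd i a y + pd i b y"
  "y \<in> U \<Longrightarrow> smooth_on U a \<Longrightarrow> smooth_on U b \<Longrightarrow> pd i (\<lambda>z. a z - b z) y = pd i a y - pd i b y"
  "y \<in> U \<Longrightarrow> smooth_on U a \<Longrightarrow> smooth_on U b \<Longrightarrow> pd i (\<lambda>z. a z * b z) y = pd i a y * b y + a y * pd i b y"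
  "y \<in> U \<Longrightarrow> (\<And>j. smooth_on U (F j)) \<Longrightarrow> pd i (\<lambda>z. \<Sum>j\<in>(UNIV::'b::finite set). F j z) y = (\<Sum>j\<in>UNIV. pd i (F j) y)"
  by (auto intro!: pd_add pd_diff pd_mult pd_sum)

lemma pd_loc: "y \<in> U \<Longrightarrow> (\<And>z. z \<in> U \<Longrightarrow> a z = b z) \<Longrightarrow> pd i a y = pd i b y"
  using pd_local[OF U_open] by blast

lemma schwarzU: "smooth_on U h \<Longrightarrow> y \<in> U \<Longrightarrow> pd j (pd i h) y = pd i (pd j h) y"
  by (rule schwarz[OF U_open]) auto

definition "Gm y = (\<lambda>a b. g y $ a $ b)"
definition "Hm y = (\<lambda>a b. ginv g y $ a $ b)"
definition "dGm y = (\<lambda>c a b. pd c (\<lambda>z. g z $ a $ b) y)"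
definition "ddGm y = (\<lambda>d c a b. pd d (pd c (\<lambda>z. g z $ a $ b)) y)"
definition "dHm y = (\<lambda>c a b. pd c (\<lambda>z. ginv g z $ a $ b) y)"
definition "Gam y = (\<lambda>k i j. christoffel g k i j y)"
definition "dGam y = (\<lambda>l k i j. pd l (christoffel g k i j) y)"
definition "ddGam y = (\<lambda>m l k i j. pd m (pd l (christoffel g k i j)) y)"

lemma Gm_sym: "y \<in> U \<Longrightarrow> Gm y a b = Gm y b a" unfolding Gm_def using G_sym by blast
lemma Hm_sym: "y \<in> U \<Longrightarrow> Hm y a b = Hm y b a" unfolding Hm_def using H_sym by blast
lemma HGm: "y \<in> U \<Longrightarrow> (\<Sum>b\<in>UNIV. Hm y a b * Gm y b c) = (if a = c then 1 else 0)"
  unfolding Hm_def Gm_def by (rule HG)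
lemma GHm: "y \<in> U \<Longrightarrow> (\<Sum>b\<in>UNIV. Gm y a b * Hm y b c) = (if a = c then 1 else 0)"
  unfolding Hm_def Gm_def by (rule GH)

lemma dGm_sym: "y \<in> U \<Longrightarrow> dGm y c a b = dGm y c b a"
  unfolding dGm_def using G_sym by (intro pd_loc) auto

lemma Gam_def': "Gam y k i j = 1/2 * (\<Sum>l\<in>UNIV. Hm y k l * (dGm y i j l + dGm y j i l - dGm y l i j))"
  unfolding Gam_def Hm_def dGm_def christoffel_def by simp

lemma Gam_sym: "y \<in> U \<Longrightarrow> Gam y k i j = Gam y k j i"
  unfolding Gam_def' using dGm_sym by (simp add: algebra_simps)

lemma compat: "y \<in> U \<Longrightarrow> dGm y c a b = (\<Sum>p\<in>UNIV. Gam y p c a * Gm y p b + Gam y p c b * Gm y a p)"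
  by (rule algL1[OF Gm_sym Hm_sym HGm dGm_sym Gam_def'])

lemma dGam_sym: "y \<in> U \<Longrightarrow> dGam y l k i j = dGam y l k j i"
  unfolding dGam_def using Gam_sym unfolding Gam_def by (intro pd_loc) auto

lemma ddGam_sym: "y \<in> U \<Longrightarrow> ddGam y m l k i j = ddGam y l m k i j"
  unfolding ddGam_def by (rule schwarzU) auto

lemma ddGm_sym: "y \<in> U \<Longrightarrow> ddGm y d c a b = ddGm y c d a b"
  unfolding ddGm_def by (rule schwarzU) auto

lemma dcompat: "y \<in> U \<Longrightarrow> ddGm y d c a b = (\<Sum>p\<in>UNIV. dGam y d p c a * Gm y p b + Gam y p c a * dGm y d p b
                                    + dGam y d p c b * Gm y a p + Gam y p c b * dGm y d a p)"
proof -
  assume y: "y \<in> U"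
  have "ddGm y d c a b = pd d (\<lambda>z. \<Sum>p\<in>UNIV. christoffel g p c a z * g z $ p $ b + christoffel g p c b z * g z $ a $ p) y"
    unfolding ddGm_def using compat unfolding dGm_def Gam_def Gm_def by (intro pd_loc[OF y]) auto
  also have "\<dots> = (\<Sum>p\<in>UNIV. dGam y d p c a * Gm y p b + Gam y p c a * dGm y d p b
                                    + dGam y d p c b * Gm y a p + Gam y p c b * dGm y d a p)"
    using y by (simp add: pd_simps dGam_def Gam_def Gm_def dGm_def add.assoc)
  finally show ?thesis .
qed

lemma dHG: "y \<in> U \<Longrightarrow> (\<Sum>l\<in>UNIV. dHm y c a l * Gm y l b + Hm y a l * dGm y c l b) = 0"
proof -
  assume y: "y \<in> U"
  have "0 = pd c (\<lambda>z. (if a = b then 1 else 0)) y" by (simp add: pd_const)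
  also have "\<dots> = pd c (\<lambda>z. \<Sum>l\<in>UNIV. ginv g z $ a $ l * g z $ l $ b) y"
    using HG by (intro pd_loc[OF y]) auto
  also have "\<dots> = (\<Sum>l\<in>UNIV. dHm y c a l * Gm y l b + Hm y a l * dGm y c l b)"
    using y by (simp add: pd_simps dHm_def Gm_def Hm_def dGm_def)
  finally show ?thesis by simp
qed

lemma dHm: "y \<in> U \<Longrightarrow> dHm y c a m = - (\<Sum>p\<in>UNIV. Hm y a p * Gam y m c p + Gam y a c p * Hm y p m)"
  by (rule algL2[OF GHm HGm dHG compat])


definition "Rmfun a b c d = (\<lambda>z. pd c (christoffel g a d b) z - pd d (christoffel g a c b) z
   + (\<Sum>p\<in>UNIV. christoffel g a c p z * christoffel g p d b z - christoffel g a d p z * christoffel g p c b z))"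

lemma Rmfun_eq: "Rmfun a b c d y = Rmf (Gam y) (dGam y) a b c d"
  unfolding Rmfun_def Rmf_def Gam_def dGam_def by simp

lemma Rmfun_smooth[simp]: "smooth_on U (Rmfun a b c d)"
  unfolding Rmfun_def by simp

lemma dRmfun: "y \<in> U \<Longrightarrow> pd e (Rmfun a b c d) y = dRmf (Gam y) (dGam y) (ddGam y) e a b c d"
  unfolding Rmfun_def dRmf_def Gam_def dGam_def ddGam_def
  by (simp add: pd_simps algebra_simps sum_subtractf sum.distrib)

lemma ricci_fun: "ricci g i j = (\<lambda>x. \<Sum>k\<in>UNIV. pd k (christoffel g k i j) x - pd j (christoffel g k i k) x
      + (\<Sum>l\<in>UNIV. christoffel g k k l x * christoffel g l i j x
                   - christoffel g k j l x * christoffel g l i k x))"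
  by (simp add: fun_eq_iff ricci_def)

lemma ricci_smooth[simp]: "smooth_on U (ricci g i j)"
  unfolding ricci_fun by simp

lemma ricci_eq: "y \<in> U \<Longrightarrow> ricci g b d y = (\<Sum>a\<in>UNIV. Rmfun a b a d y)"
proof -
  assume y: "y \<in> U"
  have "\<And>a. dGam y a a b d = dGam y a a d b" "\<And>a. dGam y d a b a = dGam y d a a b"
    "\<And>l. Gam y l b d = Gam y l d b" "\<And>a l. Gam y l b a = Gam y l a b"
    using dGam_sym[OF y] Gam_sym[OF y] by auto
  then show ?thesis unfolding ricci_def Rmfun_eq Rmf_def
    unfolding Gam_def dGam_def by simp
qed

lemma ricci_eq': "y \<in> U \<Longrightarrow> ricci g b d y = Ricf (Gam y) (dGam y) b d"
  using ricci_eq unfolding Ricf_def Rmfun_eq by simp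

lemma dricci: "y \<in> U \<Longrightarrow> pd e (ricci g b d) y = dRicf (Gam y) (dGam y) (ddGam y) e b d"
proof -
  assume y: "y \<in> U"
  have "pd e (ricci g b d) y = pd e (\<lambda>z. \<Sum>a\<in>UNIV. Rmfun a b a d z) y"
    using ricci_eq by (intro pd_loc[OF y]) auto
  also have "\<dots> = dRicf (Gam y) (dGam y) (ddGam y) e b d"
    using y by (simp add: pd_simps dRmfun dRicf_def)
  finally show ?thesis .
qed

lemma L4y: "y \<in> U \<Longrightarrow> (\<Sum>p\<in>UNIV. Gm y h p * Rmf (Gam y) (dGam y) p b c d) + (\<Sum>p\<in>UNIV. Gm y b p * Rmf (Gam y) (dGam y) p h c d) = 0"
  by (rule algL4[OF Gm_sym compat dcompat ddGm_sym])

lemma Ky: "y \<in> U \<Longrightarrow> (\<Sum>b\<in>UNIV. \<Sum>d\<in>UNIV. Hm y b d * Rmf (Gam y) (dGam y) a' b d e) + (\<Sum>h\<in>UNIV. Hm y a' h * Ricf (Gam y) (dGam y) h e) = 0"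
  by (rule algL5[OF HGm Hm_sym L4y])

lemma Ric_sym_y: "y \<in> U \<Longrightarrow> Ricf (Gam y) (dGam y) b d = Ricf (Gam y) (dGam y) d b"
  by (rule ric_sym[OF HGm Hm_sym L4y Gam_sym dGam_sym])

lemma dKy: "y \<in> U \<Longrightarrow> (\<Sum>b\<in>UNIV. \<Sum>d\<in>UNIV. dHm y a b d * Rmf (Gam y) (dGam y) a' b d e + Hm y b d * dRmf (Gam y) (dGam y) (ddGam y) a a' b d e)
           + (\<Sum>h\<in>UNIV. dHm y a a' h * Ricf (Gam y) (dGam y) h e + Hm y a' h * dRicf (Gam y) (dGam y) (ddGam y) a h e) = 0"
proof -
  assume y: "y \<in> U"
  have "0 = pd a (\<lambda>z. 0) y" by (simp add: pd_const)
  also have "\<dots> = pd a (\<lambda>z. (\<Sum>b\<in>UNIV. \<Sum>d\<in>UNIV. ginv g z $ b $ d * Rmfun a' b d e z) + (\<Sum>h\<in>UNIV. ginv g z $ a' $ h * ricci g h e z)) y"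
  proof (intro pd_loc[OF y])
    fix z assume z: "z \<in> U"
    show "0 = (\<Sum>b\<in>UNIV. \<Sum>d\<in>UNIV. ginv g z $ b $ d * Rmfun a' b d e z) + (\<Sum>h\<in>UNIV. ginv g z $ a' $ h * ricci g h e z)"
      using Ky[OF z, of a' e] unfolding Hm_def Rmfun_eq ricci_eq'[OF z] by simp
  qed
  also have "\<dots> = (\<Sum>b\<in>UNIV. \<Sum>d\<in>UNIV. dHm y a b d * Rmf (Gam y) (dGam y) a' b d e + Hm y b d * dRmf (Gam y) (dGam y) (ddGam y) a a' b d e)
           + (\<Sum>h\<in>UNIV. dHm y a a' h * Ricf (Gam y) (dGam y) h e + Hm y a' h * dRicf (Gam y) (dGam y) (ddGam y) a h e)"
    using y by (simp add: pd_simps dRmfun dricci dHm_def Hm_def) (simp add: ricci_eq'[OF y] Rmfun_eq)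
  finally show ?thesis by simp
qed

lemma scal_fun: "scal g = (\<lambda>x. \<Sum>i\<in>UNIV. \<Sum>j\<in>UNIV. ginv g x $ i $ j * ricci g i j x)"
  by (simp add: fun_eq_iff scal_def)

lemma scal_smooth[simp]: "smooth_on U (scal g)"
  unfolding scal_fun by simp

lemma dscal: "y \<in> U \<Longrightarrow> pd e (scal g) y = (\<Sum>b\<in>UNIV. \<Sum>d\<in>UNIV. dHm y e b d * Ricf (Gam y) (dGam y) b d
     + Hm y b d * dRicf (Gam y) (dGam y) (ddGam y) e b d)"
  unfolding scal_fun by (simp add: pd_simps dricci ricci_eq' dHm_def Hm_def)

lemma cbianchi_y: "y \<in> U \<Longrightarrow> (\<Sum>b\<in>UNIV. \<Sum>d\<in>UNIV. Hm y b d * nT (Gam y) (Ricf (Gam y) (dGam y)) (dRicf (Gam y) (dGam y) (ddGam y)) d b e)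
   = (1/2) * pd e (scal g) y"
  unfolding dscal
  by (rule contracted_bianchi[OF Gam_sym ddGam_sym Hm_sym Ky dKy dHm])

end


context rmet
begin

definition "f1m f y = (\<lambda>p. pd p f y)"
definition "f2m f y = (\<lambda>i j. pd i (pd j f) y)"
definition "f3m f y = (\<lambda>k i j. pd k (pd i (pd j f)) y)"

lemma hess_fun: "hess g f i j = (\<lambda>x. pd i (pd j f) x - (\<Sum>k\<in>UNIV. christoffel g k i j x * pd k f x))"
  by (simp add: fun_eq_iff hess_def)

lemma hess_eq: "hess g f i j y = hessf (Gam y) (f1m f y) (f2m f y) i j"
  unfolding hess_def hessf_def Gam_def f1m_def f2m_def by simp

lemma hess_smooth[simp]: "smooth_on U f \<Longrightarrow> smooth_on U (hess g f i j)"
  unfolding hess_fun by simp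

lemma dhess: "smooth_on U f \<Longrightarrow> y \<in> U \<Longrightarrow>
   pd k (hess g f i j) y = dhessf (Gam y) (dGam y) (f1m f y) (f2m f y) (f3m f y) k i j"
  unfolding hess_fun dhessf_def Gam_def dGam_def f1m_def f2m_def f3m_def
  by (simp add: pd_simps sum.distrib)

lemma f2sym: "smooth_on U f \<Longrightarrow> y \<in> U \<Longrightarrow> f2m f y i j = f2m f y j i"
  unfolding f2m_def by (rule schwarzU)

lemma f3sym: "smooth_on U f \<Longrightarrow> y \<in> U \<Longrightarrow> f3m f y k i j = f3m f y k j i"
  unfolding f3m_def using f2sym unfolding f2m_def by (intro pd_loc) auto

lemma f3sym2: "smooth_on U f \<Longrightarrow> y \<in> U \<Longrightarrow> f3m f y k j i = f3m f y j k i"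
  unfolding f3m_def by (rule schwarzU) auto

lemma lap_fun: "laplacian g f = (\<lambda>x. \<Sum>i\<in>UNIV. \<Sum>j\<in>UNIV. ginv g x $ i $ j * hess g f i j x)"
  by (simp add: fun_eq_iff laplacian_def)

lemma lap_smooth[simp]: "smooth_on U f \<Longrightarrow> smooth_on U (laplacian g f)"
  unfolding lap_fun by simp

lemma dlap: "smooth_on U f \<Longrightarrow> y \<in> U \<Longrightarrow> pd e (laplacian g f) y =
   (\<Sum>b\<in>UNIV. \<Sum>d\<in>UNIV. Hm y b d * nT (Gam y) (hessf (Gam y) (f1m f y) (f2m f y))
        (dhessf (Gam y) (dGam y) (f1m f y) (f2m f y) (f3m f y)) e b d)"
proof -
  assume f: "smooth_on U f" and y: "y \<in> U"
  have "pd e (laplacian g f) y = (\<Sum>b\<in>UNIV. \<Sum>d\<in>UNIV. dHm y e b d * hessf (Gam y) (f1m f y) (f2m f y) b d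
     + Hm y b d * dhessf (Gam y) (dGam y) (f1m f y) (f2m f y) (f3m f y) e b d)"
    unfolding lap_fun using f y by (simp add: pd_simps dhess dHm_def Hm_def) (simp add: hess_eq)
  also have "\<dots> = (\<Sum>b\<in>UNIV. \<Sum>d\<in>UNIV. Hm y b d * nT (Gam y) (hessf (Gam y) (f1m f y) (f2m f y))
        (dhessf (Gam y) (dGam y) (f1m f y) (f2m f y) (f3m f y)) e b d)"
    by (rule algD[OF dHm[OF y]])
  finally show ?thesis .
qed

lemma div_hess_y: "smooth_on U f \<Longrightarrow> y \<in> U \<Longrightarrow>
  (\<Sum>i\<in>UNIV. \<Sum>k\<in>UNIV. Hm y i k * nT (Gam y) (hessf (Gam y) (f1m f y) (f2m f y)) (dhessf (Gam y) (dGam y) (f1m f y) (f2m f y) (f3m f y)) k i j)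
  - (\<Sum>i\<in>UNIV. \<Sum>k\<in>UNIV. Hm y i k * nT (Gam y) (hessf (Gam y) (f1m f y) (f2m f y)) (dhessf (Gam y) (dGam y) (f1m f y) (f2m f y) (f3m f y)) j i k)
  = (\<Sum>h\<in>UNIV. Ricf (Gam y) (dGam y) j h * (\<Sum>q\<in>UNIV. Hm y h q * f1m f y q))"
  by (rule div_hess[OF Gam_sym dGam_sym f2sym f3sym f3sym2 Ky Hm_sym Ric_sym_y])


lemma pd_div_const: "y \<in> U \<Longrightarrow> smooth_on U a \<Longrightarrow> pd i (\<lambda>z. a z / c) y = pd i a y / c"
  using pd_cmult[of a y i "inverse c"] by (simp add: divide_inverse mult.commute)

lemma pd_cmult': "y \<in> U \<Longrightarrow> smooth_on U a \<Longrightarrow> pd i (\<lambda>z. c * a z) y = c * pd i a y"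
  using pd_cmult[of a y i c] by simp

lemma trace_HG: "y \<in> U \<Longrightarrow> (\<Sum>i\<in>UNIV. \<Sum>j\<in>UNIV. Hm y i j * Gm y i j) = real CARD('n)"
proof -
  assume y: "y \<in> U"
  have "(\<Sum>i\<in>UNIV. \<Sum>j\<in>UNIV. Hm y i j * Gm y i j) = (\<Sum>i\<in>UNIV. \<Sum>j\<in>UNIV. Hm y i j * Gm y j i)"
    using Gm_sym[OF y] by simp
  also have "\<dots> = (\<Sum>i\<in>(UNIV::'n set). 1)" using HGm[OF y] by simp
  finally show ?thesis by simp
qed

lemma main_w:
  assumes f: "smooth_on U f" and l: "smooth_on U lam"
    and hyp: "\<forall>x\<in>U. \<forall>i j. hess g f i j x + ricci g i j x = (scal g x / 2 + lam x) * g x $ i $ j"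
    and y: "y \<in> U"
  shows "(\<Sum>h\<in>UNIV. Ricf (Gam y) (dGam y) j h * (\<Sum>q\<in>UNIV. Hm y h q * f1m f y q)) = pd j lam y - pd j (laplacian g f) y"
    and "pd j (laplacian g f) y = real CARD('n) * (pd j (scal g) y / 2 + pd j lam y) - pd j (scal g) y"
proof -
  define phi where "phi z = scal g z / 2 + lam z" for z
  have sphi[simp]: "smooth_on U phi" unfolding phi_def using l by simp
  have dphi: "pd j phi y = pd j (scal g) y / 2 + pd j lam y" for j
    unfolding phi_def using y l by (simp add: pd_simps pd_div_const)
  let ?T1 = "hessf (Gam y) (f1m f y) (f2m f y)"
  let ?D1 = "dhessf (Gam y) (dGam y) (f1m f y) (f2m f y) (f3m f y)"
  let ?T2 = "Ricf (Gam y) (dGam y)"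
  let ?D2 = "dRicf (Gam y) (dGam y) (ddGam y)"
  let ?N1 = "nT (Gam y) ?T1 ?D1" and ?N2 = "nT (Gam y) ?T2 ?D2"
  have T12: "?T1 i j + ?T2 i j = phi y * Gm y i j" for i j
    using hyp y unfolding phi_def Gm_def by (simp add: hess_eq[symmetric] ricci_eq'[symmetric])
  have D12: "?D1 k i j + ?D2 k i j = pd k phi y * Gm y i j + phi y * dGm y k i j" for k i j
  proof -
    have "?D1 k i j + ?D2 k i j = pd k (\<lambda>z. hess g f i j z + ricci g i j z) y"
      using f y by (simp add: pd_simps dhess dricci)
    also have "\<dots> = pd k (\<lambda>z. phi z * g z $ i $ j) y"
      using hyp unfolding phi_def by (intro pd_loc[OF y]) auto
    also have "\<dots> = pd k phi y * Gm y i j + phi y * dGm y k i j"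
      using y by (simp add: pd_simps Gm_def dGm_def)
    finally show ?thesis .
  qed
  have N12: "?N1 k i j + ?N2 k i j = nT (Gam y) (\<lambda>i j. phi y * Gm y i j) (\<lambda>k i j. pd k phi y * Gm y i j + phi y * dGm y k i j) k i j" for k i j
  proof -
    have "?N1 k i j + ?N2 k i j = (?D1 k i j + ?D2 k i j)
       - (\<Sum>p\<in>UNIV. Gam y p k i * (?T1 p j + ?T2 p j) + Gam y p k j * (?T1 i p + ?T2 i p))"
      unfolding nT_def by (simp add: sum.distrib algebra_simps)
    then show ?thesis unfolding nT_def D12 T12 by simp
  qed
  have S3: "(\<Sum>i\<in>UNIV. \<Sum>k\<in>UNIV. Hm y i k * ?N1 k i j) + (\<Sum>i\<in>UNIV. \<Sum>k\<in>UNIV. Hm y i k * ?N2 k i j) = pd j phi y"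
  proof -
    have "(\<Sum>i\<in>UNIV. \<Sum>k\<in>UNIV. Hm y i k * ?N1 k i j) + (\<Sum>i\<in>UNIV. \<Sum>k\<in>UNIV. Hm y i k * ?N2 k i j)
        = (\<Sum>i\<in>UNIV. \<Sum>k\<in>UNIV. Hm y i k * (?N1 k i j + ?N2 k i j))"
      by (simp add: sum.distrib algebra_simps)
    also have "\<dots> = pd j phi y"
      unfolding N12 by (rule div_phig[OF compat[OF y] HGm[OF y] Hm_sym[OF y]])
    finally show ?thesis .
  qed
  have S4: "(\<Sum>i\<in>UNIV. \<Sum>k\<in>UNIV. Hm y i k * ?N2 k i j) = (1/2) * pd j (scal g) y"
    by (rule cbianchi_y[OF y])
  have S5: "(\<Sum>i\<in>UNIV. \<Sum>k\<in>UNIV. Hm y i k * ?N1 j i k) = pd j (laplacian g f) y"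
    using dlap[OF f y] by simp
  have S6: "(\<Sum>i\<in>UNIV. \<Sum>k\<in>UNIV. Hm y i k * ?N1 k i j) - (\<Sum>i\<in>UNIV. \<Sum>k\<in>UNIV. Hm y i k * ?N1 j i k)
     = (\<Sum>h\<in>UNIV. Ricf (Gam y) (dGam y) j h * (\<Sum>q\<in>UNIV. Hm y h q * f1m f y q))"
    by (rule div_hess_y[OF f y])
  have lapU: "laplacian g f z = real CARD('n) * phi z - scal g z" if z: "z \<in> U" for z
  proof -
    have hz: "hess g f i j z = phi z * Gm z i j - ricci g i j z" for i j
    proof -
      have "hess g f i j z + ricci g i j z = phi z * Gm z i j" using hyp z by (simp add: phi_def Gm_def)
      then show ?thesis by (simp add: eq_diff_eq)
    qed
    have "laplacian g f z = (\<Sum>i\<in>UNIV. \<Sum>j\<in>UNIV. Hm z i j * (phi z * Gm z i j - ricci g i j z))"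
      unfolding lap_fun by (simp only: hz Hm_def)
    also have "\<dots> = phi z * (\<Sum>i\<in>UNIV. \<Sum>j\<in>UNIV. Hm z i j * Gm z i j) - scal g z"
      unfolding scal_def Hm_def by (simp add: sum_subtractf sum_distrib_left algebra_simps)
    finally show ?thesis using trace_HG[OF z] by simp
  qed
  have dlapphi: "pd j (laplacian g f) y = real CARD('n) * pd j phi y - pd j (scal g) y"
  proof -
    have "pd j (laplacian g f) y = pd j (\<lambda>z. real CARD('n) * phi z - scal g z) y"
      using lapU by (intro pd_loc[OF y]) auto
    also have "\<dots> = real CARD('n) * pd j phi y - pd j (scal g) y"
      using y by (simp add: pd_simps pd_const)
    finally show ?thesis .
  qed
  show "(\<Sum>h\<in>UNIV. Ricf (Gam y) (dGam y) j h * (\<Sum>q\<in>UNIV. Hm y h q * f1m f y q)) = pd j lam y - pd j (laplacian g f) y"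
    using S3 S4 S5 S6 dphi[of j] by linarith
  show "pd j (laplacian g f) y = real CARD('n) * (pd j (scal g) y / 2 + pd j lam y) - pd j (scal g) y"
    using dlapphi dphi[of j] by simp
qed

end


theorem proposition2p4:
  fixes U :: "(real^'n::finite) set" and g :: "'n metric"
    and f lam :: "'n scalarf"
  assumes "CARD('n) \<ge> 3"
    and "open U"
    and "riemannian_metric_on U g"
    and "smooth_on U f" and "smooth_on U lam"
    and "\<forall>x\<in>U. grad g f x \<noteq> 0"
    and "\<forall>x\<in>U. \<forall>i j. hess g f i j x + ricci g i j x = (scal g x / 2 + lam x) * g x $ i $ j"
  shows "(\<forall>x\<in>U. ricci_op g x (grad g f x)
            = - (real CARD('n) - 1) *\<^sub>R grad g lam x
              - ((real CARD('n) - 2) / 2) *\<^sub>R grad g (scal g) x)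
       \<and> ((\<forall>x\<in>U. ricci_op g x (grad g f x) = 0) \<longrightarrow>
            (\<forall>x\<in>U. grad g lam x = grad g (laplacian g f) x
               \<and> grad g (laplacian g f) x
                   = - ((real CARD('n) - 2) / (2 * (real CARD('n) - 1))) *\<^sub>R grad g (scal g) x))"
proof -
  interpret rmet U g using assms(2,3) by unfold_locales
  define n where "n = real CARD('n)"
  have n3: "n \<ge> 3" using assms(1) unfolding n_def by simp
  define w where "w x j = (\<Sum>h\<in>UNIV. Ricf (Gam x) (dGam x) j h * (\<Sum>q\<in>UNIV. Hm x h q * f1m f x q))" for x j
  have W: "w x j = pd j lam x - pd j (laplacian g f) x" if "x \<in> U" for x j
    unfolding w_def by (rule main_w(1)[OF assms(4,5,7) that])
  have L: "pd j (laplacian g f) x = n * (pd j (scal g) x / 2 + pd j lam x) - pd j (scal g) x" if "x \<in> U" for x j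
    unfolding n_def by (rule main_w(2)[OF assms(4,5,7) that])
  have W2: "w x j = - (n - 1) * pd j lam x - ((n - 2) / 2) * pd j (scal g) x" if "x \<in> U" for x j
  proof -
    have e1: "n * (pd j (scal g) x / 2 + pd j lam x) = n * pd j (scal g) x / 2 + n * pd j lam x"
      by (simp add: algebra_simps)
    have e2: "(n - 1) * pd j lam x = n * pd j lam x - pd j lam x" by (simp add: algebra_simps)
    have e3: "((n - 2) / 2) * pd j (scal g) x = n * pd j (scal g) x / 2 - pd j (scal g) x"
      by (simp add: field_simps)
    show ?thesis using W[OF that, of j] L[OF that, of j] e1 e2 e3 by linarith
  qed
  have Q: "ricci_op g x (grad g f x) $ i = (\<Sum>j\<in>UNIV. Hm x i j * w x j)" if x: "x \<in> U" for x i
  proof -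
    have "ricci_op g x (grad g f x) $ i = (\<Sum>j\<in>UNIV. \<Sum>k\<in>UNIV. Hm x i j * Ricf (Gam x) (dGam x) j k * (\<Sum>l\<in>UNIV. Hm x k l * f1m f x l))"
      unfolding ricci_op_def grad_def Hm_def f1m_def using ricci_eq'[OF x] by simp
    then show ?thesis unfolding w_def by (simp add: sum_distrib_left mult.assoc)
  qed
  have part1: "\<forall>x\<in>U. ricci_op g x (grad g f x)
            = - (real CARD('n) - 1) *\<^sub>R grad g lam x
              - ((real CARD('n) - 2) / 2) *\<^sub>R grad g (scal g) x"
  proof
    fix x assume x: "x \<in> U"
    show "ricci_op g x (grad g f x) = - (real CARD('n) - 1) *\<^sub>R grad g lam x
              - ((real CARD('n) - 2) / 2) *\<^sub>R grad g (scal g) x"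
    proof (rule vec_eq_iff[THEN iffD2], rule allI)
      fix i
      have "ricci_op g x (grad g f x) $ i = (\<Sum>j\<in>UNIV. Hm x i j * (- (n - 1) * pd j lam x - ((n - 2) / 2) * pd j (scal g) x))"
        unfolding Q[OF x] using W2[OF x] by simp
      also have "\<dots> = (- (n - 1) *\<^sub>R grad g lam x - ((n - 2) / 2) *\<^sub>R grad g (scal g) x) $ i"
        unfolding grad_def Hm_def by (simp add: sum_subtractf sum_distrib_left sum.distrib sum_divide_distrib algebra_simps)
      finally show "ricci_op g x (grad g f x) $ i = (- (real CARD('n) - 1) *\<^sub>R grad g lam x
              - ((real CARD('n) - 2) / 2) *\<^sub>R grad g (scal g) x) $ i" unfolding n_def .
    qed
  qed
  have part2: "(\<forall>x\<in>U. ricci_op g x (grad g f x) = 0) \<longrightarrow>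
            (\<forall>x\<in>U. grad g lam x = grad g (laplacian g f) x
               \<and> grad g (laplacian g f) x
                   = - ((real CARD('n) - 2) / (2 * (real CARD('n) - 1))) *\<^sub>R grad g (scal g) x)"
  proof (intro impI ballI)
    assume Q0: "\<forall>x\<in>U. ricci_op g x (grad g f x) = 0"
    fix x assume x: "x \<in> U"
    have w0: "w x j = 0" for j
    proof -
      have "w x j = (\<Sum>i\<in>UNIV. Gm x j i * (\<Sum>a\<in>UNIV. Hm x i a * w x a))"
      proof -
        have "(\<Sum>i\<in>UNIV. Gm x j i * (\<Sum>a\<in>UNIV. Hm x i a * w x a)) = (\<Sum>a\<in>UNIV. (\<Sum>i\<in>UNIV. Gm x j i * Hm x i a) * w x a)"
          by (simp add: sum_distrib_left sum_distrib_right mult.assoc) (rule sum.swap)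
        then show ?thesis by (simp add: GHm[OF x])
      qed
      also have "\<dots> = 0" using Q[OF x] Q0 x by simp
      finally show ?thesis .
    qed
    have c: "n - 1 \<noteq> 0" using n3 by simp
    have dl: "pd j lam x = pd j (laplacian g f) x" for j using W[OF x, of j] w0[of j] by simp
    have dlap: "pd j (laplacian g f) x = - ((n - 2) / (2 * (n - 1))) * pd j (scal g) x" for j
    proof -
      have "- (n - 1) * pd j lam x - ((n - 2) / 2) * pd j (scal g) x = 0" using W2[OF x, of j] w0[of j] by simp
      then have "pd j lam x = - ((n - 2) / (2 * (n - 1))) * pd j (scal g) x"
        using c by (simp add: field_simps)
      then show ?thesis using dl by simp
    qed
    show "grad g lam x = grad g (laplacian g f) x
               \<and> grad g (laplacian g f) x
                   = - ((real CARD('n) - 2) / (2 * (real CARD('n) - 1))) *\<^sub>R grad g (scal g) x"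
    proof
      show "grad g lam x = grad g (laplacian g f) x" unfolding grad_def using dl by simp
      show "grad g (laplacian g f) x = - ((real CARD('n) - 2) / (2 * (real CARD('n) - 1))) *\<^sub>R grad g (scal g) x"
        unfolding grad_def vec_eq_iff using dlap unfolding n_def by (simp add: sum_distrib_left sum_divide_distrib sum_negf mult_ac)
    qed
  qed
  show ?thesis using part1 part2 by blast
qed


end
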